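(* Let ${}^*\mathbb{Q}$ be a field elementarily equivalent to $\mathbb{Q}$ (in the ring language), with ${}^*\mathbb{Z}$, ${}^*\mathbb{N}$, $\mathcal{P}({}^*\mathbb{N})$, the maps $d_p$ and the order $<$ as described in the context. For $a_0,a_1\in{}^*\mathbb{Q}\setminus\{0\}$, we have $a_0=a_1$ if and only if $d_p(a_0)=d_p(a_1)$ for all $p\in\mathcal{P}({}^*\mathbb{N})$ and $a_0a_1>0$. Equivalently, the map ${}^*\mathbb{Q}\setminus\{0\}\to\prod_{p\in\mathcal{P}({}^*\mathbb{N})}p^{{}^*\mathbb{Z}}\times\{\pm1\}$, $a\mapsto((d_p(a))_p,\operatorname{sgn}(a))$, is an injective group homomorphism, where $\operatorname{sgn}(a)=1$ if $a>0$ and $-1$ if $a<0$.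
   Context: Fix a first-order formula $Z(x)$ in the ring language defining $\mathbb{Z}$ in $\mathbb{Q}$ (such exists by J. Robinson). Let ${}^*\mathbb{Z}=Z({}^*\mathbb{Q})$ and let ${}^*\mathbb{N}$ be the set of elements of ${}^*\mathbb{Q}$ that are sums of four squares of elements of ${}^*\mathbb{Z}$. For $x,y\in{}^*\mathbb{Z}$, $x\mid y$ means $y=zx$ for some $z\in{}^*\mathbb{Z}$, $z\neq0$. $\mathcal{P}({}^*\mathbb{N})$ is the set of $p\in{}^*\mathbb{N}$, $p\ne1$, whose only divisors in ${}^*\mathbb{Z}$ are $\pm1,\pm p$. For such $p$, $p^{{}^*\mathbb{N}}$ is the set of $y\in{}^*\mathbb{N}$ such that $y=1$ or every $z\in{}^*\mathbb{N}$, $z\neq\pm1$, with $z\mid y$ satisfies $p\mid z$; and $p^{{}^*\mathbb{Z}}=p^{{}^*\mathbb{N}}\cup\{1/x:x\in p^{{}^*\mathbb{N}}\}$, a group under multiplication. For $x\in{}^*\mathbb{Z}\setminus\{0\}$, $d_p(x)$ is the unique $y\in p^{{}^*\mathbb{N}}$ with $y\mid x$ and $py\nmid x$; it is extended to ${}^*\mathbb{Q}\setminus\{0\}$ by $d_p(a/b)=d_p(a)/d_p(b)$ for $a,b\in{}^*\mathbb{Z}\setminus\{0\}$. The order on ${}^*\mathbb{Q}$: for $a_1,a_2\in{}^*\mathbb{Z}$ and $b_1,b_2\in{}^*\mathbb{N}\setminus\{0\}$, $a_1/b_1<a_2/b_2$ iff $a_2b_1-a_1b_2\in{}^*\mathbb{N}$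 (and they are distinct). *)

theory Defs
  imports Complex_Main
begin

datatype rterm = RVar nat | RZero | ROne | RAdd rterm rterm | RMul rterm rterm | RNeg rterm

datatype rform = FEq rterm rterm | FNot rform | FAnd rform rform | FEx nat rform

fun teval :: "(nat \<Rightarrow> 'a::comm_ring_1) \<Rightarrow> rterm \<Rightarrow> 'a" where
  "teval e (RVar n) = e n"
| "teval e RZero = 0"
| "teval e ROne = 1"
| "teval e (RAdd s t) = teval e s + teval e t"
| "teval e (RMul s t) = teval e s * teval e t"
| "teval e (RNeg t) = - teval e t"

fun sat :: "(nat \<Rightarrow> 'a::comm_ring_1) \<Rightarrow> rform \<Rightarrow> bool" where
  "sat e (FEq s t) = (teval e s = teval e t)"
| "sat e (FNot \<phi>) = (\<not> sat e \<phi>)"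
| "sat e (FAnd \<phi> \<psi>) = (sat e \<phi> \<and> sat e \<psi>)"
| "sat e (FEx n \<phi>) = (\<exists>x. sat (e(n := x)) \<phi>)"

fun tvars :: "rterm \<Rightarrow> nat set" where
  "tvars (RVar n) = {n}"
| "tvars RZero = {}"
| "tvars ROne = {}"
| "tvars (RAdd s t) = tvars s \<union> tvars t"
| "tvars (RMul s t) = tvars s \<union> tvars t"
| "tvars (RNeg t) = tvars t"

fun fvars :: "rform \<Rightarrow> nat set" where
  "fvars (FEq s t) = tvars s \<union> tvars t"
| "fvars (FNot \<phi>) = fvars \<phi>"
| "fvars (FAnd \<phi> \<psi>) = fvars \<phi> \<union> fvars \<psi>"
| "fvars (FEx n \<phi>) = fvars \<phi> - {n}"

definition sentence :: "rform \<Rightarrow> bool" where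
  "sentence \<phi> \<longleftrightarrow> fvars \<phi> = {}"

definition elem_equiv_Q :: "'a::field itself \<Rightarrow> bool" where
  "elem_equiv_Q _ \<longleftrightarrow>
     (\<forall>\<phi>. sentence \<phi> \<longrightarrow> (sat (\<lambda>_. 0::'a) \<phi> \<longleftrightarrow> sat (\<lambda>_. 0::rat) \<phi>))"

definition defines_Z_in_Q :: "rform \<Rightarrow> bool" where
  "defines_Z_in_Q Z \<longleftrightarrow> fvars Z \<subseteq> {0} \<and> (\<forall>q::rat. sat (\<lambda>_. q) Z \<longleftrightarrow> q \<in> \<int>)"

definition sZ :: "rform \<Rightarrow> 'a::field set" where
  "sZ Z = {x. sat (\<lambda>_. x) Z}"

definition sN :: "rform \<Rightarrow> 'a::field set" where
  "sN Z = {x. \<exists>a\<in>sZ Z. \<exists>b\<in>sZ Z. \<exists>c\<in>sZ Z. \<exists>d\<in>sZ Z. x = a^2 + b^2 + c^2 + d^2}"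

definition sdvd :: "rform \<Rightarrow> 'a::field \<Rightarrow> 'a \<Rightarrow> bool" where
  "sdvd Z x y \<longleftrightarrow> (\<exists>z\<in>sZ Z. z \<noteq> 0 \<and> y = z * x)"

definition sprimes :: "rform \<Rightarrow> 'a::field set" where
  "sprimes Z = {p \<in> sN Z. p \<noteq> 1 \<and>
      (\<forall>d\<in>sZ Z. sdvd Z d p \<longrightarrow> d = 1 \<or> d = -1 \<or> d = p \<or> d = -p)}"

definition ppowN :: "rform \<Rightarrow> 'a::field \<Rightarrow> 'a set" where
  "ppowN Z p = {y \<in> sN Z. y = 1 \<or>
      (\<forall>z\<in>sN Z. z \<noteq> 1 \<and> z \<noteq> -1 \<and> sdvd Z z y \<longrightarrow> sdvd Z p z)}"

definition ppowZ :: "rform \<Rightarrow> 'a::field \<Rightarrow> 'a set" where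
  "ppowZ Z p = ppowN Z p \<union> {1 / x | x. x \<in> ppowN Z p}"

definition dpZ :: "rform \<Rightarrow> 'a::field \<Rightarrow> 'a \<Rightarrow> 'a" where
  "dpZ Z p x = (THE y. y \<in> ppowN Z p \<and> sdvd Z y x \<and> \<not> sdvd Z (p * y) x)"

definition dpQ :: "rform \<Rightarrow> 'a::field \<Rightarrow> 'a \<Rightarrow> 'a" where
  "dpQ Z p q = (SOME r. \<exists>a\<in>sZ Z. \<exists>b\<in>sZ Z. a \<noteq> 0 \<and> b \<noteq> 0 \<and> q = a / b \<and>
                          r = dpZ Z p a / dpZ Z p b)"

definition sless :: "rform \<Rightarrow> 'a::field \<Rightarrow> 'a \<Rightarrow> bool" where
  "sless Z x y \<longleftrightarrow> x \<noteq> y \<and>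
     (\<exists>a1\<in>sZ Z. \<exists>a2\<in>sZ Z. \<exists>b1\<in>sN Z - {0}. \<exists>b2\<in>sN Z - {0}.
        x = a1 / b1 \<and> y = a2 / b2 \<and> a2 * b1 - a1 * b2 \<in> sN Z)"

definition ssgn :: "rform \<Rightarrow> 'a::field \<Rightarrow> 'a" where
  "ssgn Z a = (if sless Z 0 a then 1 else if sless Z a 0 then -1 else 0)"

end

theory Submission
  imports Defs "HOL-Computational_Algebra.Primes" "HOL-Library.Discrete_Functions"
begin


lemma teval_cong: "(\<forall>n\<in>tvars t. e n = e' n) \<Longrightarrow> teval e t = teval e' t"
  by (induction t) auto

lemma sat_cong: "(\<forall>n\<in>fvars \<phi>. e n = e' n) \<Longrightarrow> sat e \<phi> = sat e' \<phi>"
proof (induction \<phi> arbitrary: e e')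
  case (FEq s t) then show ?case using teval_cong[of s e e'] teval_cong[of t e e'] by auto
next
  case (FNot \<phi>) then show ?case by auto
next
  case (FAnd \<phi> \<psi>)
  have "sat e \<phi> = sat e' \<phi>" by (rule FAnd.IH(1)) (use FAnd.prems in auto)
  moreover have "sat e \<psi> = sat e' \<psi>" by (rule FAnd.IH(2)) (use FAnd.prems in auto)
  ultimately show ?case by simp
next
  case (FEx n \<phi>)
  have "\<And>x. sat (e(n:=x)) \<phi> = sat (e'(n:=x)) \<phi>"
    by (rule FEx.IH) (use FEx.prems in auto)
  then show ?case by simp
qed

definition fOr where "fOr A B = FNot (FAnd (FNot A) (FNot B))"
definition fImp where "fImp A B = FNot (FAnd A (FNot B))"
definition fAll where "fAll n A = FNot (FEx n (FNot A))"
definition fNe where "fNe s t = FNot (FEq s t)"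

lemma sat_conn[simp]:
  "sat e (fOr A B) = (sat e A \<or> sat e B)"
  "sat e (fImp A B) = (sat e A \<longrightarrow> sat e B)"
  "sat e (fAll n A) = (\<forall>x. sat (e(n:=x)) A)"
  "sat e (fNe s t) = (teval e s \<noteq> teval e t)"
  by (auto simp: fOr_def fImp_def fAll_def fNe_def)

lemma fvars_conn[simp]:
  "fvars (fOr A B) = fvars A \<union> fvars B"
  "fvars (fImp A B) = fvars A \<union> fvars B"
  "fvars (fAll n A) = fvars A - {n}"
  "fvars (fNe s t) = tvars s \<union> tvars t"
  by (auto simp: fOr_def fImp_def fAll_def fNe_def)

definition Dp :: "rform \<Rightarrow> 'a::field \<Rightarrow> 'a \<Rightarrow> 'a \<Rightarrow> bool" where
  "Dp Z p x u \<longleftrightarrow> u \<in> ppowN Z p \<and> sdvd Z u x \<and> \<not> sdvd Z (p * u) x"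

definition DQ :: "rform \<Rightarrow> 'a::field \<Rightarrow> 'a \<Rightarrow> 'a \<Rightarrow> bool" where
  "DQ Z p a r \<longleftrightarrow> (\<exists>x y u v. x \<in> sZ Z \<and> y \<in> sZ Z \<and> x \<noteq> 0 \<and> y \<noteq> 0 \<and> a * y = x
        \<and> Dp Z p x u \<and> Dp Z p y v \<and> r * v = u)"

lemma sless_alt: "sless Z x y \<longleftrightarrow> x \<noteq> y \<and>
     (\<exists>a1 a2 b1 b2. a1 \<in> sZ Z \<and> a2 \<in> sZ Z \<and> b1 \<in> sN Z \<and> b1 \<noteq> 0 \<and> b2 \<in> sN Z \<and> b2 \<noteq> 0 \<and>
        x * b1 = a1 \<and> y * b2 = a2 \<and> a2 * b1 - a1 * b2 \<in> sN Z)"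
proof -
  have "\<And>b a::'a. b \<noteq> 0 \<Longrightarrow> (x = a / b) = (x * b = a)" for x by (auto simp: eq_divide_eq)
  then show ?thesis unfolding sless_def by (auto; metis)
qed

locale zf =
  fixes Z :: rform
  assumes fvZ: "fvars Z \<subseteq> {0}"
begin

definition "fZ k = FEx 0 (FAnd (FEq (RVar 0) (RVar k)) Z)"

lemma sat_Z: "sat e Z \<longleftrightarrow> e 0 \<in> sZ Z"
proof -
  have "sat e Z = sat (\<lambda>_. e 0) Z" by (rule sat_cong) (use fvZ in auto)
  then show ?thesis by (simp add: sZ_def)
qed

lemma sat_fZ[simp]: "k \<noteq> 0 \<Longrightarrow> sat e (fZ k) \<longleftrightarrow> e k \<in> sZ Z"
  by (auto simp: fZ_def sat_Z)

lemma fvars_fZ[simp]: "k \<noteq> 0 \<Longrightarrow> fvars (fZ k) = {k}"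
  using fvZ by (auto simp: fZ_def)

definition "fN j k = FEx j (FEx (j+1) (FEx (j+2) (FEx (j+3)
   (FAnd (fZ j) (FAnd (fZ (j+1)) (FAnd (fZ (j+2)) (FAnd (fZ (j+3))
     (FEq (RVar k) (RAdd (RAdd (RAdd (RMul (RVar j) (RVar j)) (RMul (RVar (j+1)) (RVar (j+1))))
        (RMul (RVar (j+2)) (RVar (j+2)))) (RMul (RVar (j+3)) (RVar (j+3))))))))))))"

lemma sat_fN[simp]: "0 < k \<Longrightarrow> k < j \<Longrightarrow> sat e (fN j k) \<longleftrightarrow> e k \<in> sN Z"
  by (auto simp: fN_def sN_def power2_eq_square)

lemma fvars_fN[simp]: "0 < k \<Longrightarrow> k < j \<Longrightarrow> fvars (fN j k) = {k}"
  by (auto simp: fN_def)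

definition "fDvd j x y = FEx j (FAnd (fZ j) (FAnd (FNot (FEq (RVar j) RZero))
     (FEq (RVar y) (RMul (RVar j) (RVar x)))))"

lemma sat_fDvd[simp]: "0 < x \<Longrightarrow> 0 < y \<Longrightarrow> x < j \<Longrightarrow> y < j \<Longrightarrow>
   sat e (fDvd j x y) \<longleftrightarrow> sdvd Z (e x) (e y)"
  by (auto simp: fDvd_def sdvd_def)

lemma fvars_fDvd[simp]: "0 < x \<Longrightarrow> 0 < y \<Longrightarrow> x < j \<Longrightarrow> y < j \<Longrightarrow> fvars (fDvd j x y) = {x, y}"
  by (auto simp: fDvd_def)

definition "fPrime j p = FAnd (fN j p) (FAnd (FNot (FEq (RVar p) ROne))
   (fAll j (fImp (FAnd (fZ j) (fDvd (j+1) j p))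
     (fOr (FEq (RVar j) ROne) (fOr (FEq (RVar j) (RNeg ROne))
        (fOr (FEq (RVar j) (RVar p)) (FEq (RVar j) (RNeg (RVar p)))))))))"

lemma sat_fPrime[simp]: "0 < p \<Longrightarrow> p < j \<Longrightarrow> sat e (fPrime j p) \<longleftrightarrow> e p \<in> sprimes Z"
  by (auto simp: fPrime_def sprimes_def)

lemma fvars_fPrime[simp]: "0 < p \<Longrightarrow> p < j \<Longrightarrow> fvars (fPrime j p) = {p}"
  by (auto simp: fPrime_def)

definition "fPowN j p y = FAnd (fN j y) (fOr (FEq (RVar y) ROne)
   (fAll j (fImp (FAnd (fN (j+1) j) (FAnd (fNe (RVar j) ROne) (FAnd (fNe (RVar j) (RNeg ROne))
        (fDvd (j+1) j y)))) (fDvd (j+1) p j))))"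

lemma sat_fPowN[simp]: "0 < p \<Longrightarrow> 0 < y \<Longrightarrow> p < j \<Longrightarrow> y < j \<Longrightarrow>
   sat e (fPowN j p y) \<longleftrightarrow> e y \<in> ppowN Z (e p)"
  by (auto simp: fPowN_def ppowN_def)

lemma fvars_fPowN[simp]: "0 < p \<Longrightarrow> 0 < y \<Longrightarrow> p < j \<Longrightarrow> y < j \<Longrightarrow> fvars (fPowN j p y) = {p, y}"
  by (auto simp: fPowN_def)

definition "fD j p x u = FAnd (fPowN j p u) (FAnd (fDvd j u x)
   (FNot (FEx j (FAnd (FEq (RVar j) (RMul (RVar p) (RVar u))) (fDvd (j+1) j x)))))"

lemma sat_fD[simp]: "0 < p \<Longrightarrow> 0 < x \<Longrightarrow> 0 < u \<Longrightarrow> p < j \<Longrightarrow> x < j \<Longrightarrow> u < j \<Longrightarrow>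
   sat e (fD j p x u) \<longleftrightarrow> Dp Z (e p) (e x) (e u)"
  by (auto simp: fD_def Dp_def)

lemma fvars_fD[simp]: "0 < p \<Longrightarrow> 0 < x \<Longrightarrow> 0 < u \<Longrightarrow> p < j \<Longrightarrow> x < j \<Longrightarrow> u < j \<Longrightarrow>
   fvars (fD j p x u) = {p, x, u}"
  by (auto simp: fD_def)

definition "fDQ j p a r = FEx j (FEx (j+1) (FEx (j+2) (FEx (j+3)
   (FAnd (fZ j) (FAnd (fZ (j+1)) (FAnd (fNe (RVar j) RZero) (FAnd (fNe (RVar (j+1)) RZero)
   (FAnd (FEq (RMul (RVar a) (RVar (j+1))) (RVar j))
   (FAnd (fD (j+4) p j (j+2)) (FAnd (fD (j+4) p (j+1) (j+3))
     (FEq (RMul (RVar r) (RVar (j+3))) (RVar (j+2)))))))))))))"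

lemma sat_fDQ[simp]: "0 < p \<Longrightarrow> 0 < a \<Longrightarrow> 0 < r \<Longrightarrow> p < j \<Longrightarrow> a < j \<Longrightarrow> r < j \<Longrightarrow>
   sat e (fDQ j p a r) \<longleftrightarrow> DQ Z (e p) (e a) (e r)"
  by (auto simp: fDQ_def DQ_def)

lemma fvars_fDQ[simp]: "0 < p \<Longrightarrow> 0 < a \<Longrightarrow> 0 < r \<Longrightarrow> p < j \<Longrightarrow> a < j \<Longrightarrow> r < j \<Longrightarrow>
   fvars (fDQ j p a r) = {p, a, r}"
  by (auto simp: fDQ_def)

definition "fLess j x y = FAnd (fNe (RVar x) (RVar y)) (FEx j (FEx (j+1) (FEx (j+2) (FEx (j+3)
   (FAnd (fZ j) (FAnd (fZ (j+1)) (FAnd (fN (j+4) (j+2)) (FAnd (fNe (RVar (j+2)) RZero)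
   (FAnd (fN (j+4) (j+3)) (FAnd (fNe (RVar (j+3)) RZero)
   (FAnd (FEq (RMul (RVar x) (RVar (j+2))) (RVar j))
   (FAnd (FEq (RMul (RVar y) (RVar (j+3))) (RVar (j+1)))
   (FEx (j+4) (FAnd (FEq (RVar (j+4)) (RAdd (RMul (RVar (j+1)) (RVar (j+2))) (RNeg (RMul (RVar j) (RVar (j+3))))))
      (fN (j+5) (j+4))))))))))))))))"

lemma sat_fLess[simp]: "0 < x \<Longrightarrow> 0 < y \<Longrightarrow> x < j \<Longrightarrow> y < j \<Longrightarrow>
   sat e (fLess j x y) \<longleftrightarrow> sless Z (e x) (e y)"
  by (auto simp: fLess_def sless_alt)

lemma fvars_fLess[simp]: "0 < x \<Longrightarrow> 0 < y \<Longrightarrow> x < j \<Longrightarrow> y < j \<Longrightarrow> fvars (fLess j x y) = {x, y}"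
  by (auto simp: fLess_def)

end


context zf
begin

abbreviation "V \<equiv> RVar"

definition "sP1 = fAll 1 (fImp (fPrime 20 1) (fAll 2 (fImp (FAnd (fZ 2) (fNe (V 2) RZero))
   (FEx 3 (fD 20 1 2 3)))))"
definition "hP1 (t::'a::field itself) \<longleftrightarrow> (\<forall>p::'a. p \<in> sprimes Z \<longrightarrow> (\<forall>x. x \<in> sZ Z \<and> x \<noteq> 0 \<longrightarrow> (\<exists>u. Dp Z p x u)))"
lemma P1: "sat (\<lambda>_. 0::'a::field) sP1 \<longleftrightarrow> hP1 TYPE('a)" "sentence sP1"
  by (auto simp: sP1_def hP1_def sentence_def)

definition "sP2 = fAll 1 (fImp (fPrime 20 1) (fAll 2 (fAll 3 (fAll 4 (fImp (FAnd (fZ 2) (FAnd (fNe (V 2) RZero)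
   (FAnd (fD 20 1 2 3) (fD 20 1 2 4)))) (FEq (V 3) (V 4)))))))"
definition "hP2 (t::'a::field itself) \<longleftrightarrow> (\<forall>p::'a. p \<in> sprimes Z \<longrightarrow> (\<forall>x u u'. x \<in> sZ Z \<and> x \<noteq> 0 \<and> Dp Z p x u \<and> Dp Z p x u' \<longrightarrow> u = u'))"
lemma P2: "sat (\<lambda>_. 0::'a::field) sP2 \<longleftrightarrow> hP2 TYPE('a)" "sentence sP2"
  by (auto simp: sP2_def hP2_def sentence_def)

definition "sP3 = fAll 1 (fImp (fPrime 20 1) (fAll 2 (fAll 3 (fAll 4 (fImp (FAnd (fNe (V 2) RZero)
   (FAnd (fDQ 20 1 2 3) (fDQ 20 1 2 4))) (FEq (V 3) (V 4)))))))"
definition "hP3 (t::'a::field itself) \<longleftrightarrow> (\<forall>p::'a. p \<in> sprimes Z \<longrightarrow> (\<forall>a r r'. a \<noteq> 0 \<and> DQ Z p a r \<and> DQ Z p a r' \<longrightarrow> r = r'))"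
lemma P3: "sat (\<lambda>_. 0::'a::field) sP3 \<longleftrightarrow> hP3 TYPE('a)" "sentence sP3"
  by (auto simp: sP3_def hP3_def sentence_def)

definition "sP4 = fAll 1 (fImp (fPrime 20 1) (fAll 2 (fImp (fNe (V 2) RZero) (FEx 3 (fDQ 20 1 2 3)))))"
definition "hP4 (t::'a::field itself) \<longleftrightarrow> (\<forall>p::'a. p \<in> sprimes Z \<longrightarrow> (\<forall>a. a \<noteq> 0 \<longrightarrow> (\<exists>r. DQ Z p a r)))"
lemma P4: "sat (\<lambda>_. 0::'a::field) sP4 \<longleftrightarrow> hP4 TYPE('a)" "sentence sP4"
  by (auto simp: sP4_def hP4_def sentence_def)

definition "sP5 = fAll 1 (fImp (fPrime 20 1) (fAll 2 (fAll 3 (fAll 4 (fAll 5 (fImp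
   (FAnd (fNe (V 2) RZero) (FAnd (fNe (V 3) RZero) (FAnd (fDQ 20 1 2 4) (fDQ 20 1 3 5))))
   (FEx 6 (FEx 7 (FAnd (FEq (V 6) (RMul (V 2) (V 3))) (FAnd (FEq (V 7) (RMul (V 4) (V 5))) (fDQ 20 1 6 7)))))))))))"
definition "hP5 (t::'a::field itself) \<longleftrightarrow> (\<forall>p::'a. p \<in> sprimes Z \<longrightarrow> (\<forall>a b r s. a \<noteq> 0 \<and> b \<noteq> 0 \<and> DQ Z p a r \<and> DQ Z p b s
    \<longrightarrow> DQ Z p (a*b) (r*s)))"
lemma P5: "sat (\<lambda>_. 0::'a::field) sP5 \<longleftrightarrow> hP5 TYPE('a)" "sentence sP5"
  by (auto simp: sP5_def hP5_def sentence_def)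

definition "sP6 = fAll 1 (fImp (fPrime 20 1) (fAll 2 (fAll 3 (fImp (FAnd (fNe (V 2) RZero) (fDQ 20 1 2 3))
   (fOr (fPowN 20 1 3) (FEx 4 (FAnd (fPowN 20 1 4) (FEq (RMul (V 3) (V 4)) ROne))))))))"
definition "hP6 (t::'a::field itself) \<longleftrightarrow> (\<forall>p::'a. p \<in> sprimes Z \<longrightarrow> (\<forall>a r. a \<noteq> 0 \<and> DQ Z p a r
    \<longrightarrow> r \<in> ppowN Z p \<or> (\<exists>w. w \<in> ppowN Z p \<and> r * w = 1)))"
lemma P6: "sat (\<lambda>_. 0::'a::field) sP6 \<longleftrightarrow> hP6 TYPE('a)" "sentence sP6"
  by (auto simp: sP6_def hP6_def sentence_def)

definition "sP7 = fAll 1 (fAll 2 (fImp (FAnd (fNe (V 1) RZero) (FAnd (fNe (V 2) RZero)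
   (FAnd (FEx 3 (FEx 4 (FAnd (FEq (V 3) RZero) (FAnd (FEq (V 4) (RMul (V 1) (V 2))) (fLess 20 3 4)))))
     (fAll 5 (fImp (fPrime 20 5) (fAll 6 (fImp (fDQ 20 5 1 6) (fDQ 20 5 2 6))))))))
   (FEq (V 1) (V 2))))"
definition "hP7 (t::'a::field itself) \<longleftrightarrow> (\<forall>a b::'a. a \<noteq> 0 \<and> b \<noteq> 0 \<and> sless Z 0 (a*b) \<and>
    (\<forall>p. p \<in> sprimes Z \<longrightarrow> (\<forall>r. DQ Z p a r \<longrightarrow> DQ Z p b r)) \<longrightarrow> a = b)"
lemma P7: "sat (\<lambda>_. 0::'a::field) sP7 \<longleftrightarrow> hP7 TYPE('a)" "sentence sP7"
  by (auto simp: sP7_def hP7_def sentence_def)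

definition "sS1 = fAll 1 (fImp (fNe (V 1) RZero) (FEx 2 (FAnd (FEq (V 2) RZero) (fOr (fLess 20 2 1) (fLess 20 1 2)))))"
definition "hS1 (t::'a::field itself) \<longleftrightarrow> (\<forall>x::'a. x \<noteq> 0 \<longrightarrow> sless Z 0 x \<or> sless Z x 0)"
lemma S1: "sat (\<lambda>_. 0::'a::field) sS1 \<longleftrightarrow> hS1 TYPE('a)" "sentence sS1"
  by (auto simp: sS1_def hS1_def sentence_def)

definition "sS2 = fAll 1 (FNot (FEx 2 (FAnd (FEq (V 2) RZero) (FAnd (fLess 20 2 1) (fLess 20 1 2)))))"
definition "hS2 (t::'a::field itself) \<longleftrightarrow> (\<forall>x::'a. \<not> (sless Z 0 x \<and> sless Z x 0))"
lemma S2: "sat (\<lambda>_. 0::'a::field) sS2 \<longleftrightarrow> hS2 TYPE('a)" "sentence sS2"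
  by (auto simp: sS2_def hS2_def sentence_def)

definition "sS3 = fAll 1 (fAll 2 (FEx 3 (FEx 4 (FAnd (FEq (V 3) RZero) (FAnd (FEq (V 4) (RMul (V 1) (V 2)))
   (FAnd (fImp (FAnd (fLess 20 3 1) (fLess 20 3 2)) (fLess 20 3 4))
   (FAnd (fImp (FAnd (fLess 20 3 1) (fLess 20 2 3)) (fLess 20 4 3))
   (FAnd (fImp (FAnd (fLess 20 1 3) (fLess 20 3 2)) (fLess 20 4 3))
         (fImp (FAnd (fLess 20 1 3) (fLess 20 2 3)) (fLess 20 3 4))))))))))"
definition "hS3 (t::'a::field itself) \<longleftrightarrow> (\<forall>x y::'a.
   (sless Z 0 x \<and> sless Z 0 y \<longrightarrow> sless Z 0 (x*y)) \<and>
   (sless Z 0 x \<and> sless Z y 0 \<longrightarrow> sless Z (x*y) 0) \<and>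
   (sless Z x 0 \<and> sless Z 0 y \<longrightarrow> sless Z (x*y) 0) \<and>
   (sless Z x 0 \<and> sless Z y 0 \<longrightarrow> sless Z 0 (x*y)))"
lemma S3: "sat (\<lambda>_. 0::'a::field) sS3 \<longleftrightarrow> hS3 TYPE('a)" "sentence sS3"
  by (auto simp: sS3_def hS3_def sentence_def)

definition "sS4 = fAll 1 (fImp (fNe (V 1) RZero) (FEx 2 (FEx 3 (FAnd (FEq (V 2) RZero)
   (FAnd (FEq (V 3) (RMul (V 1) (V 1))) (fLess 20 2 3))))))"
definition "hS4 (t::'a::field itself) \<longleftrightarrow> (\<forall>x::'a. x \<noteq> 0 \<longrightarrow> sless Z 0 (x*x))"
lemma S4: "sat (\<lambda>_. 0::'a::field) sS4 \<longleftrightarrow> hS4 TYPE('a)" "sentence sS4"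
  by (auto simp: sS4_def hS4_def sentence_def)

definition "sC = FNot (FEq (RAdd ROne ROne) RZero)"
lemma C: "sat (\<lambda>_. 0::'a::field) sC \<longleftrightarrow> (1 + 1 \<noteq> (0::'a))" "sentence sC"
  by (auto simp: sC_def sentence_def)

end


locale fside = zf +
  fixes T :: "'a::field itself"
  assumes h1: "hP1 TYPE('a)" and h2: "hP2 TYPE('a)" and h3: "hP3 TYPE('a)" and h4: "hP4 TYPE('a)"
    and h5: "hP5 TYPE('a)" and h6: "hP6 TYPE('a)" and h7: "hP7 TYPE('a)"
    and s1: "hS1 TYPE('a)" and s2: "hS2 TYPE('a)" and s3: "hS3 TYPE('a)" and s4: "hS4 TYPE('a)"
    and c2: "1 + 1 \<noteq> (0::'a)"
begin

lemma Dp_nz: "Dp Z p x u \<Longrightarrow> x \<noteq> 0 \<Longrightarrow> u \<noteq> 0"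
  by (auto simp: Dp_def sdvd_def)

lemma dpZ_eq: assumes "(p::'a) \<in> sprimes Z" "x \<in> sZ Z" "x \<noteq> 0" "Dp Z p x u"
  shows "dpZ Z p x = u"
proof -
  have "\<And>u'. Dp Z p x u' \<Longrightarrow> u' = u" using h2 assms unfolding hP2_def by blast
  moreover have "dpZ Z p x = (THE y. Dp Z p x y)" by (simp add: dpZ_def Dp_def)
  ultimately show ?thesis using assms(4) by (metis the_equality)
qed

lemma dpZ_prop: assumes "(p::'a) \<in> sprimes Z" "x \<in> sZ Z" "x \<noteq> 0"
  shows "Dp Z p x (dpZ Z p x)"
proof -
  obtain u where "Dp Z p x u" using h1 assms unfolding hP1_def by blast
  with dpZ_eq[OF assms this] show ?thesis by simp
qed

lemma DQ_dpQ: assumes p: "(p::'a) \<in> sprimes Z" and a: "a \<noteq> 0"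
  shows "DQ Z p a (dpQ Z p a)"
proof -
  let ?P = "\<lambda>r. \<exists>x\<in>sZ Z. \<exists>y\<in>sZ Z. x \<noteq> 0 \<and> y \<noteq> 0 \<and> a = x / y \<and> r = dpZ Z p x / dpZ Z p y"
  obtain r where "DQ Z p a r" using h4 p a unfolding hP4_def by blast
  then obtain x y where xy: "x \<in> sZ Z" "y \<in> sZ Z" "x \<noteq> 0" "y \<noteq> 0" "a * y = x"
    unfolding DQ_def by blast
  have "a = x / y" using xy by (simp add: eq_divide_eq)
  then have "?P (dpZ Z p x / dpZ Z p y)" using xy by blast
  then have "?P (dpQ Z p a)" unfolding dpQ_def by (rule someI)
  then obtain x' y' where w: "x' \<in> sZ Z" "y' \<in> sZ Z" "x' \<noteq> 0" "y' \<noteq> 0" "a = x' / y'"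
     "dpQ Z p a = dpZ Z p x' / dpZ Z p y'" by blast
  have d1: "Dp Z p x' (dpZ Z p x')" and d2: "Dp Z p y' (dpZ Z p y')"
    using dpZ_prop p w by auto
  have "dpZ Z p y' \<noteq> 0" using Dp_nz[OF d2 w(4)] .
  then show ?thesis unfolding DQ_def using w d1 d2
    by (intro exI[of _ x'] exI[of _ y'] exI[of _ "dpZ Z p x'"] exI[of _ "dpZ Z p y'"]) auto
qed

lemma DQ_unique: "(p::'a) \<in> sprimes Z \<Longrightarrow> a \<noteq> 0 \<Longrightarrow> DQ Z p a r \<Longrightarrow> r = dpQ Z p a"
  using h3 DQ_dpQ unfolding hP3_def by blast

lemma ssgn_pos: "sless Z 0 (a::'a) \<Longrightarrow> ssgn Z a = 1" by (simp add: ssgn_def)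
lemma ssgn_neg: "sless Z (a::'a) 0 \<Longrightarrow> ssgn Z a = -1"
  using s2 by (auto simp: ssgn_def hS2_def)

lemma one_ne: "(1::'a) \<noteq> -1"
proof
  assume "(1::'a) = -1"
  then have "(1::'a) + 1 = 1 + -1" by simp
  then show False using c2 by simp
qed

lemma S3A: "sless Z 0 (x::'a) \<Longrightarrow> sless Z 0 y \<Longrightarrow> sless Z 0 (x*y)"
  and S3B: "sless Z 0 (x::'a) \<Longrightarrow> sless Z y 0 \<Longrightarrow> sless Z (x*y) 0"
  and S3C: "sless Z (x::'a) 0 \<Longrightarrow> sless Z 0 y \<Longrightarrow> sless Z (x*y) 0"
  and S3D: "sless Z (x::'a) 0 \<Longrightarrow> sless Z y 0 \<Longrightarrow> sless Z 0 (x*y)"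
  using s3 unfolding hS3_def by blast+

lemma main: shows "(\<forall>a0 a1 :: 'a. a0 \<noteq> 0 \<longrightarrow> a1 \<noteq> 0 \<longrightarrow>
            (a0 = a1 \<longleftrightarrow> (\<forall>p\<in>sprimes Z. dpQ Z p a0 = dpQ Z p a1) \<and> sless Z 0 (a0 * a1)))
       \<and> (\<forall>a :: 'a. a \<noteq> 0 \<longrightarrow> (\<forall>p\<in>sprimes Z. dpQ Z p a \<in> ppowZ Z p) \<and> ssgn Z a \<in> {1, -1})
       \<and> (\<forall>a b :: 'a. a \<noteq> 0 \<longrightarrow> b \<noteq> 0 \<longrightarrow>
            (\<forall>p\<in>sprimes Z. dpQ Z p (a * b) = dpQ Z p a * dpQ Z p b)
            \<and> ssgn Z (a * b) = ssgn Z a * ssgn Z b)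
       \<and> (\<forall>a b :: 'a. a \<noteq> 0 \<longrightarrow> b \<noteq> 0 \<longrightarrow>
            (\<forall>p\<in>sprimes Z. dpQ Z p a = dpQ Z p b) \<longrightarrow> ssgn Z a = ssgn Z b \<longrightarrow> a = b)"
proof -
  have bk: "a = b" if "(a::'a) \<noteq> 0" "b \<noteq> 0" "\<forall>p\<in>sprimes Z. dpQ Z p a = dpQ Z p b"
    "sless Z 0 (a*b)" for a b
  proof -
    have "\<forall>p. p \<in> sprimes Z \<longrightarrow> (\<forall>r. DQ Z p a r \<longrightarrow> DQ Z p b r)"
    proof (intro allI impI)
      fix p r assume p: "p \<in> sprimes Z" and "DQ Z p a r"
      then have "r = dpQ Z p a" using DQ_unique that(1) by blast
      also have "\<dots> = dpQ Z p b" using that(3) p by blast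
      finally show "DQ Z p b r" using DQ_dpQ[OF p that(2)] by simp
    qed
    then show ?thesis using h7 that(1,2,4) unfolding hP7_def by blast
  qed
  have sg: "ssgn Z a \<in> {1,-1}" if "(a::'a) \<noteq> 0" for a
    using s1 that ssgn_pos ssgn_neg unfolding hS1_def by blast
  have P1: "a0 = a1 \<longleftrightarrow> (\<forall>p\<in>sprimes Z. dpQ Z p a0 = dpQ Z p a1) \<and> sless Z 0 (a0 * a1)"
    if "(a0::'a) \<noteq> 0" "a1 \<noteq> 0" for a0 a1
  proof
    assume "a0 = a1"
    then show "(\<forall>p\<in>sprimes Z. dpQ Z p a0 = dpQ Z p a1) \<and> sless Z 0 (a0 * a1)"
      using s4 that unfolding hS4_def by simp
  next
    assume "(\<forall>p\<in>sprimes Z. dpQ Z p a0 = dpQ Z p a1) \<and> sless Z 0 (a0 * a1)"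
    then show "a0 = a1" using bk[OF that] by blast
  qed
  have P2: "dpQ Z p a \<in> ppowZ Z p" if "(a::'a) \<noteq> 0" "p \<in> sprimes Z" for a p
  proof -
    have "dpQ Z p a \<in> ppowN Z p \<or> (\<exists>w. w \<in> ppowN Z p \<and> dpQ Z p a * w = 1)"
      using h6 DQ_dpQ that unfolding hP6_def by blast
    moreover have "dpQ Z p a = 1 / w" if "dpQ Z p a * w = 1" for w
      using that by (metis divide_self_if mult_zero_right nonzero_mult_div_cancel_right zero_neq_one)
    ultimately show ?thesis unfolding ppowZ_def by blast
  qed
  have P3: "dpQ Z p (a*b) = dpQ Z p a * dpQ Z p b" if "(a::'a) \<noteq> 0" "b \<noteq> 0" "p \<in> sprimes Z" for a b p
  proof -
    have "DQ Z p (a*b) (dpQ Z p a * dpQ Z p b)"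
      using h5 DQ_dpQ that unfolding hP5_def by blast
    then show ?thesis using DQ_unique that by simp
  qed
  have P3b: "ssgn Z (a * b) = ssgn Z a * ssgn Z b" if "(a::'a) \<noteq> 0" "b \<noteq> 0" for a b
  proof -
    have "sless Z 0 a \<or> sless Z a 0" "sless Z 0 b \<or> sless Z b 0" using s1 that unfolding hS1_def by auto
    then show ?thesis
      by (elim disjE) (simp_all add: ssgn_pos ssgn_neg S3A S3B S3C S3D)
  qed
  have P4: "a = b" if "(a::'a) \<noteq> 0" "b \<noteq> 0" "\<forall>p\<in>sprimes Z. dpQ Z p a = dpQ Z p b"
     "ssgn Z a = ssgn Z b" for a b
  proof -
    have "sless Z 0 a \<or> sless Z a 0" "sless Z 0 b \<or> sless Z b 0" using s1 that unfolding hS1_def by auto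
    then have "sless Z 0 (a*b)" using that(4) one_ne
      by (elim disjE) (simp_all add: ssgn_pos ssgn_neg S3A S3D)
    then show ?thesis using bk that by blast
  qed
  show ?thesis
    apply (intro conjI allI impI ballI)
    subgoal by (rule P1)
    subgoal by (rule P2)
    subgoal by (rule sg)
    subgoal by (rule P3)
    subgoal by (rule P3b)
    subgoal by (rule P4)
    done
qed

end


definition s4 :: "int \<Rightarrow> bool" where
  "s4 n \<longleftrightarrow> (\<exists>a b c d. n = a^2 + b^2 + c^2 + d^2)"

lemma s4_mult: assumes "s4 m" "s4 n" shows "s4 (m * n)"
proof -
  obtain a b c d where m: "m = a^2 + b^2 + c^2 + d^2" using assms(1) s4_def by blast
  obtain e f g h where n: "n = e^2 + f^2 + g^2 + h^2" using assms(2) s4_def by blast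
  have "m * n = (a*e - b*f - c*g - d*h)^2 + (a*f + b*e + c*h - d*g)^2 +
     (a*g - b*h + c*e + d*f)^2 + (a*h + b*g - c*f + d*e)^2"
    unfolding m n by (simp add: power2_eq_square algebra_simps)
  then show ?thesis unfolding s4_def by blast
qed

lemma small_dvd: fixes p m :: int assumes "p dvd m" "\<bar>m\<bar> < p" shows "m = 0"
proof -
  obtain q where q: "m = p * q" using assms(1) by (auto simp: dvd_def)
  have "p > 0" using assms(2) by simp
  show ?thesis
  proof (rule ccontr)
    assume "m \<noteq> 0"
    then have "q \<noteq> 0" using q by auto
    then have "\<bar>q\<bar> \<ge> 1" by simp
    then have "p * 1 \<le> p * \<bar>q\<bar>" using \<open>p > 0\<close> by (intro mult_left_mono) auto
    then have "\<bar>m\<bar> \<ge> p" using q \<open>p > 0\<close> by (simp add: abs_mult)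
    then show False using assms(2) by simp
  qed
qed

lemma sq_inj_mod:
  fixes p a a' :: int
  assumes p: "prime p" and a: "0 \<le> a" "2 * a < p" and a': "0 \<le> a'" "2 * a' < p"
    and d: "p dvd a^2 - a'^2"
  shows "a = a'"
proof -
  have "a^2 - a'^2 = (a - a') * (a + a')" by (simp add: power2_eq_square algebra_simps)
  then have "p dvd (a - a') \<or> p dvd (a + a')" using d p prime_dvd_mult_iff by metis
  then show ?thesis
  proof
    assume "p dvd a - a'" then show ?thesis using small_dvd[of p "a - a'"] a a' by simp
  next
    assume "p dvd a + a'" then have "a + a' = 0" using small_dvd[of p "a + a'"] a a' by simp
    then show ?thesis using a a' by simp
  qed
qed

lemma exists_ab:
  fixes p :: int assumes p: "prime p" "odd p"
  shows "\<exists>a b. p dvd a^2 + b^2 + 1"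
proof -
  define k where "k = (p - 1) div 2"
  have p2: "p \<ge> 2" using p prime_ge_2_int by blast
  have "p mod 2 = 1" using p(2) by presburger
  then have kp: "2 * k + 1 = p" unfolding k_def by presburger
  define A where "A = (\<lambda>a. a^2 mod p) ` {0..k}"
  define B where "B = (\<lambda>b. (-1 - b^2) mod p) ` {0..k}"
  have injA: "inj_on (\<lambda>a. a^2 mod p) {0..k}"
  proof (rule inj_onI)
    fix a a' assume "a \<in> {0..k}" "a' \<in> {0..k}" "a^2 mod p = a'^2 mod p"
    then show "a = a'" using sq_inj_mod[OF p(1), of a a'] kp by (auto simp: mod_eq_dvd_iff)
  qed
  have injB: "inj_on (\<lambda>b. (-1 - b^2) mod p) {0..k}"
  proof (rule inj_onI)
    fix a a' assume h: "a \<in> {0..k}" "a' \<in> {0..k}" "(-1 - a^2) mod p = (-1 - a'^2) mod p"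
    then have "p dvd (-1 - a^2) - (-1 - a'^2)" by (simp add: mod_eq_dvd_iff)
    then have "p dvd a'^2 - a^2" by (simp add: algebra_simps)
    then show "a = a'" using sq_inj_mod[OF p(1), of a' a] h kp by auto
  qed
  have cA: "card A = nat (k + 1)" unfolding A_def using card_image[OF injA] by simp
  have cB: "card B = nat (k + 1)" unfolding B_def using card_image[OF injB] by simp
  have sub: "A \<union> B \<subseteq> {0..<p}" unfolding A_def B_def using p2 by auto
  have fin: "finite A" "finite B" unfolding A_def B_def by auto
  have "card (A \<union> B) \<le> card {0..<p}" using sub by (intro card_mono) auto
  then have "card (A \<union> B) \<le> nat p" by simp
  moreover have "card (A \<union> B) + card (A \<inter> B) = card A + card B" using card_Un_Int[OF fin] by simp
  moreover have "card A + card B = nat p + 1"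
  proof -
    have "k \<ge> 0" using kp p2 by linarith
    then have "int (card A + card B) = int (nat p + 1)" using cA cB kp p2 by simp
    then show ?thesis by (simp only: of_nat_eq_iff)
  qed
  ultimately have "card (A \<inter> B) \<noteq> 0" by linarith
  then have "A \<inter> B \<noteq> {}" by auto
  then obtain a b where "a^2 mod p = (-1 - b^2) mod p" unfolding A_def B_def by auto
  then have "p dvd a^2 - (-1 - b^2)" by (simp add: mod_eq_dvd_iff)
  then show ?thesis by (auto simp: algebra_simps)
qed

lemma red2: fixes x y z w p :: int
  assumes "x^2 + y^2 + z^2 + w^2 = 2 * p" "even (x - y)" "even (z - w)"
  shows "s4 p"
proof -
  obtain B where B: "x - y = 2 * B" using assms(2) by (blast elim: dvdE)
  obtain D where D: "z - w = 2 * D" using assms(3) by (blast elim: dvdE)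
  define A where "A = y + B"
  define C where "C = w + D"
  have e: "x = A + B" "y = A - B" "z = C + D" "w = C - D" using B D unfolding A_def C_def by auto
  have "x^2 + y^2 + z^2 + w^2 = 2 * (A^2 + B^2 + C^2 + D^2)"
    by (simp only: e) (simp add: power2_eq_square algebra_simps)
  then have "2 * p = 2 * (A^2 + B^2 + C^2 + D^2)" using assms(1) by simp
  then have "p = A^2 + B^2 + C^2 + D^2" by simp
  then show ?thesis unfolding s4_def by blast
qed

lemma case2: fixes x y z w p :: int
  assumes "x^2 + y^2 + z^2 + w^2 = 2 * p" shows "s4 p"
proof -
  have ev: "even (x^2 + y^2 + z^2 + w^2)" using assms by simp
  consider "even (x - y)" "even (z - w)" | "even (x - z)" "even (y - w)" | "even (x - w)" "even (y - z)"
    using ev by auto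
  then show ?thesis
  proof cases
    case 1 then show ?thesis using red2 assms by blast
  next
    case 2 then show ?thesis using red2[of x z y w p] assms by (simp add: algebra_simps)
  next
    case 3 then show ?thesis using red2[of x w y z p] assms by (simp add: algebra_simps)
  qed
qed

lemma red3: fixes x y z w p :: int
  assumes s: "x^2 + y^2 + z^2 + w^2 = 3 * p" and m: "x mod 3 = y mod 3" "y mod 3 = z mod 3" "w mod 3 = 0"
  shows "s4 p"
proof -
  define r where "r = x mod 3"
  define qx where "qx = x div 3"
  define qy where "qy = y div 3"
  define qz where "qz = z div 3"
  define qw where "qw = w div 3"
  have dx: "x = 3 * qx + r" unfolding r_def qx_def by simp
  have dy: "y = 3 * qy + r" unfolding r_def qy_def using m(1) by (metis div_mult_mod_eq mult.commute)
  have dz: "z = 3 * qz + r" unfolding r_def qz_def using m(1,2) by (metis div_mult_mod_eq mult.commute)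
  have dw: "w = 3 * qw" unfolding qw_def using m(3) by (metis add.right_neutral div_mult_mod_eq mult.commute)
  define A where "A = qx + qy + qz + r"
  define B where "B = qx - qy + qw"
  define C where "C = qx - qz - qw"
  define D where "D = qy - qz + qw"
  have L: "x + y + z = 3 * A" "x - y + w = 3 * B" "x - z - w = 3 * C" "y - z + w = 3 * D"
    unfolding A_def B_def C_def D_def using dx dy dz dw by (simp_all add: algebra_simps)
  have "(x + y + z)^2 + (x - y + w)^2 + (x - z - w)^2 + (y - z + w)^2 = 3 * (x^2 + y^2 + z^2 + w^2)"
    by (simp add: power2_eq_square algebra_simps)
  then have "9 * (A^2 + B^2 + C^2 + D^2) = 9 * p" unfolding L s by (simp add: power2_eq_square algebra_simps)
  then have "p = A^2 + B^2 + C^2 + D^2" by simp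
  then show ?thesis unfolding s4_def by blast
qed

lemma sq_mod3: fixes q :: int shows "q^2 mod 3 = (if 3 dvd q then 0 else 1)"
proof -
  have h: "q^2 mod 3 = (q mod 3)^2 mod 3" by (simp add: power_mod)
  have "q mod 3 = 0 \<or> q mod 3 = 1 \<or> q mod 3 = 2" by presburger
  then consider "q mod 3 = 0" | "q mod 3 = 1" | "q mod 3 = 2" by blast
  then show ?thesis
  proof cases
    case 1 then show ?thesis using h by (simp add: dvd_eq_mod_eq_0)
  next
    case 2 then show ?thesis using h by (simp add: dvd_eq_mod_eq_0)
  next
    case 3 then show ?thesis using h by (simp add: dvd_eq_mod_eq_0)
  qed
qed

lemma norm3: fixes q :: int obtains q' where "q'^2 = q^2" "3 dvd q \<longleftrightarrow> 3 dvd q'" "q' mod 3 = 0 \<or> q' mod 3 = 1"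
proof (cases "q mod 3 = 2")
  case True
  then have "(-q) mod 3 = 1" by presburger
  then show ?thesis using that[of "-q"] by simp
next
  case False
  then have "q mod 3 = 0 \<or> q mod 3 = 1" by presburger
  then show ?thesis using that[of q] by simp
qed

lemma red3': fixes x y z w p :: int
  assumes s: "x^2 + y^2 + z^2 + w^2 = 3 * p" and m: "3 dvd w" "3 dvd x \<longleftrightarrow> 3 dvd y" "3 dvd y \<longleftrightarrow> 3 dvd z"
  shows "s4 p"
proof -
  obtain x' where x': "x'^2 = x^2" "3 dvd x \<longleftrightarrow> 3 dvd x'" "x' mod 3 = 0 \<or> x' mod 3 = 1" by (rule norm3)
  obtain y' where y': "y'^2 = y^2" "3 dvd y \<longleftrightarrow> 3 dvd y'" "y' mod 3 = 0 \<or> y' mod 3 = 1" by (rule norm3)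
  obtain z' where z': "z'^2 = z^2" "3 dvd z \<longleftrightarrow> 3 dvd z'" "z' mod 3 = 0 \<or> z' mod 3 = 1" by (rule norm3)
  have aux: "(a::int) = 0 \<or> a = 1 \<Longrightarrow> b = 0 \<or> b = 1 \<Longrightarrow> (a = 0 \<longleftrightarrow> b = 0) \<Longrightarrow> a = b" for a b
    by auto
  have "3 dvd x' \<longleftrightarrow> 3 dvd y'" "3 dvd y' \<longleftrightarrow> 3 dvd z'" using x'(2) y'(2) z'(2) m(2,3) by blast+
  then have i: "x' mod 3 = 0 \<longleftrightarrow> y' mod 3 = 0" "y' mod 3 = 0 \<longleftrightarrow> z' mod 3 = 0"
    by (simp_all only: dvd_eq_mod_eq_0)
  have "x' mod 3 = y' mod 3" by (rule aux[OF x'(3) y'(3) i(1)])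
  moreover have "y' mod 3 = z' mod 3" by (rule aux[OF y'(3) z'(3) i(2)])
  moreover have "w mod 3 = 0" using m(1) by (simp only: dvd_eq_mod_eq_0)
  moreover have "x'^2 + y'^2 + z'^2 + w^2 = 3 * p" using s x' y' z' by simp
  ultimately show ?thesis by (intro red3[of x' y' z' w p]) auto
qed

lemma four01:
  fixes ix iy iz iw :: int
  assumes "ix = (if A then 0 else 1)" "iy = (if B then 0 else 1)" "iz = (if C then 0 else 1)" "iw = (if D then 0 else 1)"
    "ix + iy + iz + iw = 0 \<or> ix + iy + iz + iw = 3"
  shows "(D \<and> (A \<longleftrightarrow> B) \<and> (B \<longleftrightarrow> C)) \<or> (C \<and> (A \<longleftrightarrow> B) \<and> (B \<longleftrightarrow> D)) \<or>
       (B \<and> (A \<longleftrightarrow> C) \<and> (C \<longleftrightarrow> D)) \<or> (A \<and> (B \<longleftrightarrow> C) \<and> (C \<longleftrightarrow> D))"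
  using assms by (cases A; cases B; cases C; cases D) simp_all

lemma case3: fixes x y z w p :: int
  assumes s: "x^2 + y^2 + z^2 + w^2 = 3 * p" shows "s4 p"
proof -
  have dq: "q^2 = 3 * (q^2 div 3) + (if 3 dvd q then 0 else 1)" for q :: int
    using sq_mod3[of q] div_mult_mod_eq[of "q^2" 3] by simp
  define ix where "ix = (if 3 dvd x then 0 else (1::int))"
  define iy where "iy = (if 3 dvd y then 0 else (1::int))"
  define iz where "iz = (if 3 dvd z then 0 else (1::int))"
  define iw where "iw = (if 3 dvd w then 0 else (1::int))"
  define kx where "kx = x^2 div 3"
  define ky where "ky = y^2 div 3"
  define kz where "kz = z^2 div 3"
  define kw where "kw = w^2 div 3"
  have e: "x^2 = 3 * kx + ix" "y^2 = 3 * ky + iy" "z^2 = 3 * kz + iz" "w^2 = 3 * kw + iw"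
    unfolding ix_def iy_def iz_def iw_def kx_def ky_def kz_def kw_def by (rule dq)+
  then have "ix + iy + iz + iw = 3 * p - 3 * kx - 3 * ky - 3 * kz - 3 * kw" using s by linarith
  then have S: "ix + iy + iz + iw = 3 * (p - kx - ky - kz - kw)" by (simp add: algebra_simps)
  have b: "ix = 0 \<or> ix = 1" "iy = 0 \<or> iy = 1" "iz = 0 \<or> iz = 1" "iw = 0 \<or> iw = 1"
    unfolding ix_def iy_def iz_def iw_def by simp_all
  define t where "t = p - kx - ky - kz - kw"
  have "0 \<le> 3 * t" "3 * t \<le> 4" using S b unfolding t_def[symmetric] by linarith+
  then have "t = 0 \<or> t = 1" by presburger
  then have "ix + iy + iz + iw = 0 \<or> ix + iy + iz + iw = 3" using S unfolding t_def[symmetric] by auto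
  then have "(3 dvd w \<and> (3 dvd x \<longleftrightarrow> 3 dvd y) \<and> (3 dvd y \<longleftrightarrow> 3 dvd z)) \<or>
        (3 dvd z \<and> (3 dvd x \<longleftrightarrow> 3 dvd y) \<and> (3 dvd y \<longleftrightarrow> 3 dvd w)) \<or>
        (3 dvd y \<and> (3 dvd x \<longleftrightarrow> 3 dvd z) \<and> (3 dvd z \<longleftrightarrow> 3 dvd w)) \<or>
        (3 dvd x \<and> (3 dvd y \<longleftrightarrow> 3 dvd z) \<and> (3 dvd z \<longleftrightarrow> 3 dvd w))"
    by (rule four01[OF ix_def iy_def iz_def iw_def])
  then show ?thesis
  proof (elim disjE)
    assume "3 dvd w \<and> (3 dvd x \<longleftrightarrow> 3 dvd y) \<and> (3 dvd y \<longleftrightarrow> 3 dvd z)"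
    then show ?thesis using red3' s by blast
  next
    assume "3 dvd z \<and> (3 dvd x \<longleftrightarrow> 3 dvd y) \<and> (3 dvd y \<longleftrightarrow> 3 dvd w)"
    then show ?thesis using red3'[of x y w z p] s by (simp add: algebra_simps)
  next
    assume "3 dvd y \<and> (3 dvd x \<longleftrightarrow> 3 dvd z) \<and> (3 dvd z \<longleftrightarrow> 3 dvd w)"
    then show ?thesis using red3'[of x z w y p] s by (simp add: algebra_simps)
  next
    assume "3 dvd x \<and> (3 dvd y \<longleftrightarrow> 3 dvd z) \<and> (3 dvd z \<longleftrightarrow> 3 dvd w)"
    then show ?thesis using red3'[of y z w x p] s by (simp add: algebra_simps)
  qed
qed




lemma odd_prime_int: fixes p :: int assumes "prime p" "p \<noteq> 2" shows "odd p"
proof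
  assume "even p"
  then have "2 dvd p" by simp
  then have "2 = p" using assms(1) by (intro primes_dvd_imp_eq) auto
  then show False using assms(2) by simp
qed

lemma s4_prime: fixes p :: int assumes p: "prime p" shows "s4 p"
proof (cases "p = 2")
  case True
  have "(2::int) = 1^2 + 1^2 + 0^2 + 0^2" by simp
  then show ?thesis unfolding True s4_def by blast
next
  case False
  then have odd: "odd p" using odd_prime_int p by blast
  obtain a b where ab: "p dvd a^2 + b^2 + 1" using exists_ab[OF p odd] by blast
  have p2: "p \<ge> 2" using p prime_ge_2_int by blast
  define m where "m = int (floor_sqrt (nat p))"
  have m0: "m \<ge> 0" unfolding m_def by simp
  have "int ((floor_sqrt (nat p))^2) \<le> int (nat p)" using floor_sqrt_power2_le by (simp only: of_nat_le_iff)
  then have mle: "m^2 \<le> p" unfolding m_def using p2 by simp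
  have "int (nat p) < int ((Suc (floor_sqrt (nat p)))^2)" using Suc_floor_sqrt_power2_gt by (simp only: of_nat_less_iff)
  then have mgt: "p < (m+1)^2" unfolding m_def using p2 by (simp add: add.commute)
  have "m^2 \<noteq> p" using p prime_power_iff[of m 2] by auto
  then have mlt: "m^2 < p" using mle by simp
  define S where "S = {0..m} \<times> {0..m} \<times> {0..m} \<times> {0..m}"
  define f where "f = (\<lambda>(x,y,z,w). ((x + a*z + b*w) mod p, (y + b*z - a*w) mod p))"
  have cS: "card S = nat (m+1) * nat (m+1) * nat (m+1) * nat (m+1)" unfolding S_def by (simp add: card_cartesian_product)
  have sub: "f ` S \<subseteq> {0..<p} \<times> {0..<p}" unfolding f_def S_def using p2 by auto
  have "(p::int) * p < (m+1)^2 * (m+1)^2" using mgt p2 by (intro mult_strict_mono) auto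
  moreover have "int (card S) = (m+1)^2 * (m+1)^2" unfolding cS using m0 by (simp add: power2_eq_square)
  moreover have "int (nat p * nat p) = p * p" using p2 by simp
  ultimately have lt: "nat p * nat p < card S" by (simp only: of_nat_less_iff[symmetric])
  have "\<not> inj_on f S"
  proof
    assume inj: "inj_on f S"
    have "card S = card (f ` S)" using card_image[OF inj] by simp
    also have "\<dots> \<le> card ({0..<p} \<times> {0..<p})" using sub by (intro card_mono) auto
    also have "\<dots> = nat p * nat p" by (simp add: card_cartesian_product)
    finally show False using lt by simp
  qed
  then obtain t1 t2 where t: "t1 \<in> S" "t2 \<in> S" "t1 \<noteq> t2" "f t1 = f t2" unfolding inj_on_def by blast
  obtain x1 y1 z1 w1 where t1: "t1 = (x1,y1,z1,w1)" by (cases t1) auto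
  obtain x2 y2 z2 w2 where t2: "t2 = (x2,y2,z2,w2)" by (cases t2) auto
  define X where "X = x1 - x2"
  define Y where "Y = y1 - y2"
  define Zv where "Zv = z1 - z2"
  define W where "W = w1 - w2"
  have r1: "0 \<le> x1" "x1 \<le> m" "0 \<le> y1" "y1 \<le> m" "0 \<le> z1" "z1 \<le> m" "0 \<le> w1" "w1 \<le> m"
    using t(1) unfolding t1 S_def by simp_all
  have r2: "0 \<le> x2" "x2 \<le> m" "0 \<le> y2" "y2 \<le> m" "0 \<le> z2" "z2 \<le> m" "0 \<le> w2" "w2 \<le> m"
    using t(2) unfolding t2 S_def by simp_all
  have bnd: "\<bar>X\<bar> \<le> m" "\<bar>Y\<bar> \<le> m" "\<bar>Zv\<bar> \<le> m" "\<bar>W\<bar> \<le> m"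
    unfolding X_def Y_def Zv_def W_def using r1 r2 by linarith+
  have nz: "X \<noteq> 0 \<or> Y \<noteq> 0 \<or> Zv \<noteq> 0 \<or> W \<noteq> 0"
    using t(3) unfolding t1 t2 X_def Y_def Zv_def W_def by auto
  have e1: "(x1 + a*z1 + b*w1) mod p = (x2 + a*z2 + b*w2) mod p"
   and e2: "(y1 + b*z1 - a*w1) mod p = (y2 + b*z2 - a*w2) mod p"
    using t(4) unfolding t1 t2 f_def by simp_all
  have "p dvd (x1 + a*z1 + b*w1) - (x2 + a*z2 + b*w2)" using e1 by (simp add: mod_eq_dvd_iff)
  then have d1: "p dvd X + (a*Zv + b*W)" unfolding X_def Zv_def W_def by (simp add: algebra_simps)
  have "p dvd (y1 + b*z1 - a*w1) - (y2 + b*z2 - a*w2)" using e2 by (simp add: mod_eq_dvd_iff)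
  then have d2: "p dvd Y + (b*Zv - a*W)" unfolding Y_def Zv_def W_def by (simp add: algebra_simps)
  define N where "N = X^2 + Y^2 + Zv^2 + W^2"
  have "N = (X + (a*Zv + b*W)) * (X - (a*Zv + b*W)) + (Y + (b*Zv - a*W)) * (Y - (b*Zv - a*W))
      + (a^2 + b^2 + 1) * (Zv^2 + W^2)"
    unfolding N_def by (simp add: power2_eq_square algebra_simps)
  then have pN: "p dvd N" using d1 d2 ab by (simp add: dvd_add dvd_mult2)
  have sq: "q^2 \<le> m^2" if "\<bar>q\<bar> \<le> m" for q :: int
  proof -
    have "\<bar>q\<bar>^2 \<le> m^2" using that by (intro power_mono) auto
    then show ?thesis by simp
  qed
  have Nle: "N < 4 * p" unfolding N_def using sq[OF bnd(1)] sq[OF bnd(2)] sq[OF bnd(3)] sq[OF bnd(4)] mlt by linarith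
  have "X^2 \<ge> 0" "Y^2 \<ge> 0" "Zv^2 \<ge> 0" "W^2 \<ge> 0" by simp_all
  moreover have "X^2 > 0 \<or> Y^2 > 0 \<or> Zv^2 > 0 \<or> W^2 > 0" using nz by auto
  ultimately have Npos: "N > 0" unfolding N_def by linarith
  obtain k where k: "N = p * k" using pN by (auto simp: dvd_def)
  have k0: "k > 0" using Npos k p2 by (simp add: zero_less_mult_iff)
  have k4: "k < 4"
  proof (rule ccontr)
    assume "\<not> k < 4"
    then have "p * 4 \<le> p * k" using p2 by (intro mult_left_mono) auto
    then show False using Nle k by simp
  qed
  then consider "k = 1" | "k = 2" | "k = 3" using k0 by linarith
  then show ?thesis
  proof cases
    case 1 then show ?thesis using k unfolding N_def s4_def by auto
  next
    case 2 then show ?thesis using k case2[of X Y Zv W p] unfolding N_def by (simp add: algebra_simps)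
  next
    case 3 then show ?thesis using k case3[of X Y Zv W p] unfolding N_def by (simp add: algebra_simps)
  qed
qed

lemma s4_nat: "s4 (int n)"
proof (induction n rule: less_induct)
  case (less n)
  show ?case
  proof (cases "n \<le> 1")
    case True
    then have "int n = (int n)^2 + 0^2 + 0^2 + 0^2" by (cases n) (auto simp: power2_eq_square)
    then show ?thesis unfolding s4_def by blast
  next
    case False
    then obtain p where p: "prime p" "p dvd n" using prime_factor_nat[of n] by auto
    then obtain k where nk: "n = p * k" by (auto simp: dvd_def)
    have "p \<ge> 2" using p prime_ge_2_nat by blast
    moreover have "k > 0" using nk False by (cases k) auto
    ultimately have "k < n" using nk by (simp add: less_mult_imp_div_less)
    then have "s4 (int k)" using less by blast
    moreover have "s4 (int p)" using s4_prime p by simp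
    ultimately show ?thesis using s4_mult nk by (metis of_nat_mult)
  qed
qed

lemma s4_nonneg: "(n::int) \<ge> 0 \<Longrightarrow> s4 n"
  using s4_nat[of "nat n"] by simp



definition dint :: "int \<Rightarrow> int \<Rightarrow> int" where "dint p x = p ^ multiplicity p x"

lemma dint_nz: "p = 0 \<or> prime p \<Longrightarrow> dint p x \<noteq> 0"
  by (auto simp: dint_def)

lemma dint_mult: "p = 0 \<or> prime p \<Longrightarrow> x \<noteq> 0 \<Longrightarrow> y \<noteq> 0 \<Longrightarrow> dint p (x*y) = dint p x * dint p y"
  by (auto simp: dint_def prime_elem_multiplicity_mult_distrib power_add)

definition idvd :: "int \<Rightarrow> int \<Rightarrow> bool" where "idvd i j \<longleftrightarrow> (\<exists>k. k \<noteq> 0 \<and> j = k * i)"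

lemma idvd_iff: "idvd i j \<longleftrightarrow> i dvd j \<and> (j = 0 \<longrightarrow> i = 0)"
proof
  assume "idvd i j"
  then obtain k where "k \<noteq> 0" "j = k * i" unfolding idvd_def by blast
  then show "i dvd j \<and> (j = 0 \<longrightarrow> i = 0)" by simp
next
  assume h: "i dvd j \<and> (j = 0 \<longrightarrow> i = 0)"
  then obtain m where m: "j = i * m" by (auto elim: dvdE)
  show "idvd i j"
  proof (cases "j = 0")
    case True then show ?thesis using h unfolding idvd_def by (intro exI[of _ 1]) simp
  next
    case False then show ?thesis using m unfolding idvd_def by (intro exI[of _ m]) auto
  qed
qed

lemma prime_dvd_pow_gt1: fixes p c :: int
  assumes p: "prime p" and c: "c dvd p ^ n" "c > 1" shows "p dvd c"
proof -
  have "\<not> is_unit c" using c(2) by auto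
  then obtain q where q: "q dvd c" "prime q" using prime_divisor_exists[of c] c(2) by auto
  then have "q dvd p ^ n" using c(1) dvd_trans by blast
  then have "q dvd p" using q(2) prime_dvd_power by blast
  then have "q = p" using q(2) p primes_dvd_imp_eq by blast
  then show ?thesis using q by simp
qed

lemma absprod: fixes X Y :: int assumes "\<bar>X\<bar> = \<bar>Y\<bar>" "0 < X * Y" shows "X = Y"
proof -
  have "(0 < X \<and> 0 < Y) \<or> (X < 0 \<and> Y < 0)" using assms(2) by (simp add: zero_less_mult_iff)
  then show ?thesis using assms(1) by auto
qed

locale zq =
  fixes Z :: rform
  assumes hZ: "defines_Z_in_Q Z"
begin

lemma fvZ: "fvars Z \<subseteq> {0}" using hZ by (simp add: defines_Z_in_Q_def)

sublocale zf Z by unfold_locales (rule fvZ)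

lemma sZ_rat: "(x::rat) \<in> sZ Z \<longleftrightarrow> (\<exists>i. x = of_int i)"
  using hZ by (auto simp: sZ_def defines_Z_in_Q_def Ints_def)

lemma sN_rat: "(x::rat) \<in> sN Z \<longleftrightarrow> (\<exists>i\<ge>0. x = of_int i)"
proof
  assume "x \<in> sN Z"
  then obtain a' b' c' d' where h: "a' \<in> sZ Z" "b' \<in> sZ Z" "c' \<in> sZ Z" "d' \<in> sZ Z"
    "x = a'^2 + b'^2 + c'^2 + d'^2" unfolding sN_def by blast
  then obtain a b c d where "x = of_int a ^ 2 + of_int b ^ 2 + of_int c ^ 2 + of_int d ^ 2"
    using sZ_rat by metis
  then have "x = of_int (a^2 + b^2 + c^2 + d^2)" by simp
  moreover have "a^2 + b^2 + c^2 + d^2 \<ge> 0" by simp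
  ultimately show "\<exists>i\<ge>0. x = of_int i" by blast
next
  assume "\<exists>i\<ge>0. x = of_int i"
  then obtain i where i: "i \<ge> 0" "x = of_int i" by blast
  then obtain a b c d where "i = a^2 + b^2 + c^2 + d^2" using s4_nonneg unfolding s4_def by blast
  then have "x = of_int a ^ 2 + of_int b ^ 2 + of_int c ^ 2 + of_int d ^ 2" using i by simp
  moreover have "(of_int a::rat) \<in> sZ Z" "(of_int b::rat) \<in> sZ Z" "(of_int c::rat) \<in> sZ Z"
    "(of_int d::rat) \<in> sZ Z" using sZ_rat by blast+
  ultimately show "x \<in> sN Z" unfolding sN_def by blast
qed

lemma sdvd_rat: "sdvd Z (of_int i :: rat) (of_int j) \<longleftrightarrow> idvd i j"
proof
  assume "sdvd Z (of_int i :: rat) (of_int j)"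
  then obtain z where z: "z \<in> sZ Z" "z \<noteq> 0" "(of_int j::rat) = z * of_int i" unfolding sdvd_def by blast
  then obtain k where k: "z = of_int k" using sZ_rat by blast
  have "k \<noteq> 0" using z k by simp
  moreover have "j = k * i" using z(3) k by (metis of_int_eq_iff of_int_mult)
  ultimately show "idvd i j" unfolding idvd_def by blast
next
  assume "idvd i j"
  then obtain k where k: "k \<noteq> 0" "j = k * i" unfolding idvd_def by blast
  have "(of_int k::rat) \<in> sZ Z" using sZ_rat by blast
  moreover have "(of_int j::rat) = of_int k * of_int i" using k by simp
  ultimately show "sdvd Z (of_int i :: rat) (of_int j)" unfolding sdvd_def using k(1)
    by (intro bexI[of _ "of_int k"]) simp_all
qed

lemma sprimes_rat: "(x::rat) \<in> sprimes Z \<longleftrightarrow> (\<exists>p. x = of_int p \<and> (p = 0 \<or> prime p))"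
proof
  assume x: "x \<in> sprimes Z"
  then obtain p where p: "p \<ge> 0" "x = of_int p" unfolding sprimes_def sN_rat by auto
  have p1: "p \<noteq> 1" using x p unfolding sprimes_def by auto
  have xall: "\<forall>d\<in>sZ Z. sdvd Z d x \<longrightarrow> d = 1 \<or> d = -1 \<or> d = x \<or> d = -x"
    using x by (simp add: sprimes_def)
  have dv: "e = 1 \<or> e = -1 \<or> e = p \<or> e = -p" if "idvd e p" for e
  proof -
    have ez: "(of_int e::rat) \<in> sZ Z" unfolding sZ_rat by blast
    have "sdvd Z (of_int e) (of_int p :: rat)" using that by (simp only: sdvd_rat)
    then have ed: "sdvd Z (of_int e) x" using p(2) by simp
    have "(of_int e::rat) = 1 \<or> (of_int e::rat) = -1 \<or> of_int e = x \<or> of_int e = - x"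
      using bspec[OF xall ez] ed by (rule mp)
    then have "(of_int e::rat) = of_int 1 \<or> (of_int e::rat) = of_int (-1) \<or> (of_int e::rat) = of_int p
       \<or> (of_int e::rat) = of_int (-p)" using p(2) by simp
    then show ?thesis by (simp only: of_int_eq_iff)
  qed
  show "\<exists>p. x = of_int p \<and> (p = 0 \<or> prime p)"
  proof (cases "p = 0")
    case True then show ?thesis using p by auto
  next
    case False
    have "prime p" unfolding prime_int_iff
    proof (intro conjI allI impI)
      show "1 < p" using p p1 False by simp
      fix m assume m: "0 \<le> m \<and> m dvd p"
      then have "idvd m p" unfolding idvd_iff using False by auto
      then show "m = 1 \<or> m = p" using dv[of m] m p False by auto
    qed
    then show ?thesis using p by blast
  qed
next
  assume "\<exists>p. x = of_int p \<and> (p = 0 \<or> prime p)"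
  then obtain p where p: "x = of_int p" "p = 0 \<or> prime p" by blast
  have pn: "p \<ge> 0" using p(2) prime_ge_0_int by auto
  have "x \<in> sN Z" using p pn sN_rat by auto
  moreover have "x \<noteq> 1" using p(1,2) by auto
  moreover have "d = 1 \<or> d = -1 \<or> d = x \<or> d = -x" if d: "d \<in> sZ Z" "sdvd Z d x" for d
  proof -
    obtain e where e: "d = of_int e" using d(1) sZ_rat by blast
    have ie: "idvd e p" using d(2) e p(1) sdvd_rat by simp
    have "e = 1 \<or> e = -1 \<or> e = p \<or> e = -p"
    proof (cases "p = 0")
      case True then show ?thesis using ie by (auto simp: idvd_def)
    next
      case False
      then have pr: "prime p" using p(2) by simp
      have "\<bar>e\<bar> dvd p" using ie by (simp add: idvd_iff)
      then have "\<bar>e\<bar> = 1 \<or> \<bar>e\<bar> = p" using pr unfolding prime_int_iff by auto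
      then show ?thesis by auto
    qed
    then show ?thesis using e p(1) by auto
  qed
  ultimately show "x \<in> sprimes Z" unfolding sprimes_def by blast
qed


lemma ofint_sN: "i \<ge> 0 \<Longrightarrow> (of_int i :: rat) \<in> sN Z" using sN_rat by blast

lemma ppowN_rat: assumes p: "prime p"
  shows "(y::rat) \<in> ppowN Z (of_int p) \<longleftrightarrow> (\<exists>n. y = of_int (p^n))"
proof
  assume y: "y \<in> ppowN Z (of_int p)"
  then obtain i where i: "i \<ge> 0" "y = of_int i" unfolding ppowN_def sN_rat by auto
  have cond: "i = 1 \<or> (\<forall>z\<in>sN Z. z \<noteq> 1 \<and> z \<noteq> -1 \<and> sdvd Z z y \<longrightarrow> sdvd Z (of_int p) z)"
    using y i unfolding ppowN_def by auto
  show "\<exists>n. y = of_int (p^n)"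
  proof (cases "i = 1")
    case True then show ?thesis using i by (intro exI[of _ 0]) simp
  next
    case False
    then have all: "\<forall>z\<in>sN Z. z \<noteq> 1 \<and> z \<noteq> -1 \<and> sdvd Z z y \<longrightarrow> sdvd Z (of_int p) z" using cond by simp
    have key: "p dvd c" if c: "c > 1" "c dvd i" "i \<noteq> 0" for c
    proof -
      have "(of_int c::rat) \<in> sN Z" using c ofint_sN by simp
      moreover have "(of_int c::rat) \<noteq> 1" "(of_int c::rat) \<noteq> -1" using c by simp_all
      moreover have "sdvd Z (of_int c) y" unfolding i(2) sdvd_rat idvd_iff using c by simp
      ultimately have "sdvd Z (of_int p) (of_int c :: rat)" using all by blast
      then show ?thesis by (simp only: sdvd_rat idvd_iff; simp)
    qed
    have i0: "i \<noteq> 0"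
    proof
      assume "i = 0"
      have "(0::rat) \<in> sN Z" using ofint_sN[of 0] by simp
      moreover have "sdvd Z (0::rat) 0" using sdvd_rat[of 0 0] by (simp add: idvd_iff)
      moreover have "y = 0" using i \<open>i = 0\<close> by simp
      ultimately have "sdvd Z (of_int p) (0 :: rat)" using all by simp
      then show False using p sdvd_rat[of p 0] by (simp add: idvd_iff)
    qed
    have nup: "\<not> is_unit p" using p by auto
    obtain r where r: "i = p ^ multiplicity p i * r" "\<not> p dvd r" by (rule multiplicity_decompose'[OF i0 nup])
    have "r > 0"
    proof -
      have "p ^ multiplicity p i > 0" using p prime_gt_0_int by simp
      then show ?thesis using r(1) i(1) i0 by (metis linorder_neqE_linordered_idom mult_pos_neg not_le
           zero_less_mult_pos)
    qed
    show ?thesis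
    proof (cases "r = 1")
      case True then show ?thesis using r i by (intro exI[of _ "multiplicity p i"]) simp
    next
      case False
      then have "\<not> is_unit r" using \<open>r > 0\<close> by auto
      then obtain q where q: "q dvd r" "prime q" using prime_divisor_exists[of r] \<open>r > 0\<close> by auto
      have "q > 1" using q(2) prime_gt_1_int by blast
      moreover have "q dvd i" using q(1) r(1) by (metis dvd_mult2 mult.commute)
      ultimately have "p dvd q" using key i0 by blast
      then have "p = q" using p q(2) primes_dvd_imp_eq by blast
      then show ?thesis using q r by simp
    qed
  qed
next
  assume "\<exists>n. y = of_int (p^n)"
  then obtain n where n: "y = of_int (p^n)" by blast
  have pn: "p ^ n > 0" using p prime_gt_0_int by simp
  have "y \<in> sN Z" using n pn ofint_sN[of "p^n"] by simp
  moreover have "sdvd Z (of_int p) z" if z: "z \<in> sN Z" "z \<noteq> 1" "z \<noteq> -1" "sdvd Z z y" for z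
  proof -
    obtain c where c: "c \<ge> 0" "z = of_int c" using z(1) sN_rat by blast
    have "c dvd p ^ n" "c \<noteq> 0" using z(4) pn unfolding c(2) n sdvd_rat idvd_iff by auto
    moreover have "c \<noteq> 1" using z(2) c by auto
    ultimately have "p dvd c" using prime_dvd_pow_gt1[OF p] c(1) by simp
    then show ?thesis unfolding c(2) sdvd_rat idvd_iff using \<open>c \<noteq> 0\<close> by simp
  qed
  ultimately show "y \<in> ppowN Z (of_int p)" unfolding ppowN_def by blast
qed

lemma one_ppowN: "(1::rat) \<in> ppowN Z p"
  using ofint_sN[of 1] by (simp add: ppowN_def)

lemma Dp_rat: assumes p: "p = 0 \<or> prime p" and x: "x \<noteq> 0"
  shows "Dp Z (of_int p :: rat) (of_int x) u \<longleftrightarrow> u = of_int (dint p x)"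
proof (cases "p = 0")
  case True
  have d1: "dint p x = 1" using True by (simp add: dint_def)
  show ?thesis
  proof
    assume D: "Dp Z (of_int p :: rat) (of_int x) u"
    then have up: "u \<in> ppowN Z 0" "sdvd Z u (of_int x)" using True by (auto simp: Dp_def)
    then obtain i where i: "i \<ge> 0" "u = of_int i" unfolding ppowN_def sN_rat by auto
    have "idvd i x" using up(2) i sdvd_rat by simp
    then have i0: "i \<noteq> 0" using x by (auto simp: idvd_def)
    have "i = 1"
    proof (rule ccontr)
      assume "i \<noteq> 1"
      then have "u \<noteq> 1" using i by simp
      then have all: "\<forall>z\<in>sN Z. z \<noteq> 1 \<and> z \<noteq> -1 \<and> sdvd Z z u \<longrightarrow> sdvd Z 0 z" using up(1) by (simp add: ppowN_def)
      have "u \<in> sN Z" using i ofint_sN by simp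
      moreover have "u \<noteq> -1" using i by simp
      moreover have "sdvd Z u u" unfolding i(2) sdvd_rat idvd_iff by simp
      ultimately have "sdvd Z 0 u" using all \<open>u \<noteq> 1\<close> by blast
      then have "sdvd Z (of_int 0) (of_int i :: rat)" using i by simp
      then show False using i0 by (simp only: sdvd_rat idvd_iff; simp)
    qed
    then show "u = of_int (dint p x)" using i d1 by simp
  next
    assume "u = of_int (dint p x)"
    then have u: "u = 1" using d1 by simp
    have "sdvd Z (of_int 1) (of_int x :: rat)" unfolding sdvd_rat idvd_iff using x by simp
    moreover have "\<not> sdvd Z (of_int 0) (of_int x :: rat)" unfolding sdvd_rat idvd_iff using x by simp
    ultimately show "Dp Z (of_int p :: rat) (of_int x) u" unfolding Dp_def u True using one_ppowN by simp
  qed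
next
  case False
  then have pr: "prime p" using p by simp
  have nu: "\<not> is_unit p" using pr by auto
  show ?thesis
  proof
    assume D: "Dp Z (of_int p :: rat) (of_int x) u"
    then obtain n where n: "u = of_int (p^n)" using ppowN_rat[OF pr] by (auto simp: Dp_def)
    have "sdvd Z (of_int (p^n)) (of_int x :: rat)" using D n by (simp add: Dp_def)
    then have d1: "p^n dvd x" by (simp only: sdvd_rat idvd_iff; simp)
    have "\<not> sdvd Z (of_int p * of_int (p^n)) (of_int x :: rat)" using D n by (simp add: Dp_def)
    then have "\<not> sdvd Z (of_int (p ^ Suc n)) (of_int x :: rat)" by simp
    then have d2: "\<not> p ^ Suc n dvd x" using x by (simp only: sdvd_rat idvd_iff; simp)
    have "multiplicity p x = n" using multiplicity_eqI[OF d1 d2] .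
    then show "u = of_int (dint p x)" using n by (simp add: dint_def)
  next
    assume u: "u = of_int (dint p x)"
    define m where "m = multiplicity p x"
    have "u \<in> ppowN Z (of_int p)" using u ppowN_rat[OF pr] unfolding dint_def by blast
    moreover have "p ^ m dvd x" unfolding m_def by (rule multiplicity_dvd)
    then have "sdvd Z (of_int (p^m)) (of_int x :: rat)" using x by (simp only: sdvd_rat idvd_iff; simp)
    moreover have "\<not> p ^ Suc m dvd x" using power_dvd_iff_le_multiplicity[OF x nu, of "Suc m"] unfolding m_def by simp
    then have "\<not> sdvd Z (of_int (p ^ Suc m)) (of_int x :: rat)" using x by (simp only: sdvd_rat idvd_iff; simp)
    ultimately show "Dp Z (of_int p :: rat) (of_int x) u" unfolding Dp_def u dint_def m_def[symmetric]
      by simp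
  qed
qed


lemma rat_rep: fixes a :: rat obtains n d where "d > 0" "a = of_int n / of_int d"
proof -
  obtain n d where q: "quotient_of a = (n, d)" by (cases "quotient_of a") auto
  show ?thesis using that[of d n] quotient_of_denom_pos[OF q] quotient_of_div[OF q] by simp
qed

lemma DQ_rat: assumes p: "p = 0 \<or> prime p"
  shows "DQ Z (of_int p :: rat) a r \<longleftrightarrow> (\<exists>x y. x \<noteq> 0 \<and> y \<noteq> 0 \<and> a * of_int y = of_int x \<and>
           r * of_int (dint p y) = of_int (dint p x))"
proof
  assume "DQ Z (of_int p :: rat) a r"
  then obtain x y u v where h: "x \<in> sZ Z" "y \<in> sZ Z" "x \<noteq> 0" "y \<noteq> 0" "a * y = x"
     "Dp Z (of_int p) x u" "Dp Z (of_int p) y v" "r * v = u" unfolding DQ_def by blast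
  obtain x' y' where xy: "x = of_int x'" "y = of_int y'" using h(1,2) sZ_rat by blast
  have "x' \<noteq> 0" "y' \<noteq> 0" using h xy by auto
  moreover have "u = of_int (dint p x')" "v = of_int (dint p y')"
    using h(6,7) Dp_rat[OF p] \<open>x' \<noteq> 0\<close> \<open>y' \<noteq> 0\<close> xy by blast+
  ultimately show "\<exists>x y. x \<noteq> 0 \<and> y \<noteq> 0 \<and> a * of_int y = of_int x \<and>
           r * of_int (dint p y) = of_int (dint p x)" using h xy by blast
next
  assume "\<exists>x y. x \<noteq> 0 \<and> y \<noteq> 0 \<and> a * of_int y = of_int x \<and>
           r * of_int (dint p y) = of_int (dint p x)"
  then obtain x y where h: "x \<noteq> 0" "y \<noteq> 0" "a * of_int y = of_int x"
     "r * of_int (dint p y) = of_int (dint p x)" by blast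
  have "(of_int x::rat) \<in> sZ Z" "(of_int y::rat) \<in> sZ Z" using sZ_rat by blast+
  moreover have "Dp Z (of_int p) (of_int x::rat) (of_int (dint p x))"
     "Dp Z (of_int p) (of_int y::rat) (of_int (dint p y))" using Dp_rat[OF p] h by blast+
  ultimately show "DQ Z (of_int p :: rat) a r" unfolding DQ_def using h
    by (intro exI[of _ "of_int x"] exI[of _ "of_int y"] exI[of _ "of_int (dint p x)"]
        exI[of _ "of_int (dint p y)"]) simp
qed

lemma DQ_val: assumes p: "p = 0 \<or> prime p" and "DQ Z (of_int p :: rat) a r"
  obtains x y where "x \<noteq> 0" "y \<noteq> 0" "a * of_int y = of_int x" "r = of_int (dint p x) / of_int (dint p y)"
proof -
  obtain x y where h: "x \<noteq> 0" "y \<noteq> 0" "a * of_int y = of_int x"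
           "r * of_int (dint p y) = of_int (dint p x)" using assms DQ_rat by blast
  have "(of_int (dint p y)::rat) \<noteq> 0" using dint_nz[OF p] by simp
  then have "r = of_int (dint p x) / of_int (dint p y)" using h(4) by (simp add: eq_divide_eq)
  then show ?thesis using that h by blast
qed

lemma DQ_intro: assumes p: "p = 0 \<or> prime p" and "x \<noteq> 0" "y \<noteq> 0" "a * of_int y = of_int x"
  shows "DQ Z (of_int p :: rat) a (of_int (dint p x) / of_int (dint p y))"
proof -
  have "(of_int (dint p y)::rat) \<noteq> 0" using dint_nz[OF p] by simp
  then show ?thesis unfolding DQ_rat[OF p] using assms
    by (intro exI[of _ x] exI[of _ y]) simp
qed

lemma DQ_uniq: assumes p: "p = 0 \<or> prime p" and a: "a \<noteq> 0" and "DQ Z (of_int p :: rat) a r"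
  "DQ Z (of_int p :: rat) a r'" shows "r = r'"
proof -
  obtain x1 y1 where 1: "x1 \<noteq> 0" "y1 \<noteq> 0" "a * of_int y1 = of_int x1"
     "r = of_int (dint p x1) / of_int (dint p y1)" using DQ_val[OF p assms(3)] by blast
  obtain x2 y2 where 2: "x2 \<noteq> 0" "y2 \<noteq> 0" "a * of_int y2 = of_int x2"
     "r' = of_int (dint p x2) / of_int (dint p y2)" using DQ_val[OF p assms(4)] by blast
  have "(of_int (x1 * y2)::rat) = of_int (x2 * y1)" using 1(3) 2(3)
    by (metis mult.commute mult.left_commute of_int_mult)
  then have "x1 * y2 = x2 * y1" by (simp only: of_int_eq_iff)
  then have "dint p x1 * dint p y2 = dint p x2 * dint p y1" using dint_mult[OF p] 1 2 by metis
  then have "(of_int (dint p x1) :: rat) * of_int (dint p y2) = of_int (dint p x2) * of_int (dint p y1)"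
    by (metis of_int_mult)
  moreover have "(of_int (dint p y1)::rat) \<noteq> 0" "(of_int (dint p y2)::rat) \<noteq> 0" using dint_nz[OF p] by simp_all
  ultimately show ?thesis using 1(4) 2(4) by (simp add: frac_eq_eq)
qed

lemma QLess: "sless Z (x::rat) y \<longleftrightarrow> x < y"
proof
  assume "sless Z x y"
  then obtain a1 a2 b1 b2 where h: "x \<noteq> y" "b1 \<in> sN Z" "b1 \<noteq> 0" "b2 \<in> sN Z" "b2 \<noteq> 0"
    "x * b1 = a1" "y * b2 = a2" "a2 * b1 - a1 * b2 \<in> sN Z" unfolding sless_alt by blast
  have pos: "b1 > 0" "b2 > 0" using h(2-5) sN_rat by force+
  have nn: "a2 * b1 - a1 * b2 \<ge> 0" using h(8) sN_rat by force
  have "(y - x) * (b1 * b2) = a2 * b1 - a1 * b2" using h(6,7) by (simp add: algebra_simps)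
  then have "(y - x) * (b1 * b2) \<ge> 0" using nn by simp
  moreover have bb: "b1 * b2 > 0" using pos by simp
  ultimately have "y - x \<ge> 0" by (auto simp: zero_le_mult_iff)
  then show "x < y" using h(1) by simp
next
  assume lt: "x < y"
  obtain n1 d1 where 1: "d1 > 0" "x = of_int n1 / of_int d1" by (rule rat_rep)
  obtain n2 d2 where 2: "d2 > 0" "y = of_int n2 / of_int d2" by (rule rat_rep)
  have e1: "x * of_int d1 = of_int n1" using 1 by simp
  have e2: "y * of_int d2 = of_int n2" using 2 by simp
  have "(y - x) * (of_int d1 * of_int d2) = of_int n2 * of_int d1 - of_int n1 * of_int d2"
    using e1 e2 by (simp add: algebra_simps)
  moreover have "(y - x) * (of_int d1 * of_int d2) > 0" using lt 1 2 by simp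
  ultimately have "(of_int (n2 * d1 - n1 * d2)::rat) > 0" by simp
  then have "n2 * d1 - n1 * d2 > 0" by (simp only: of_int_0_less_iff)
  then have "n2 * d1 - n1 * d2 \<ge> 0" by simp
  then have "(of_int n2 * of_int d1 - of_int n1 * of_int d2 :: rat) \<in> sN Z"
    using ofint_sN[of "n2 * d1 - n1 * d2"] by simp
  moreover have "(of_int d1::rat) \<in> sN Z" "(of_int d2::rat) \<in> sN Z" using 1 2 ofint_sN by simp_all
  moreover have "(of_int n1::rat) \<in> sZ Z" "(of_int n2::rat) \<in> sZ Z" using sZ_rat by blast+
  ultimately show "sless Z x y" unfolding sless_alt using lt e1 e2 1 2
    by (intro conjI exI[of _ "of_int n1"] exI[of _ "of_int n2"] exI[of _ "of_int d1"] exI[of _ "of_int d2"]) auto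
qed


lemma sprimesE: assumes "(q::rat) \<in> sprimes Z" obtains p where "q = of_int p" "p = 0 \<or> prime p"
  using assms sprimes_rat by blast

lemma sprimesI: "p = 0 \<or> prime p \<Longrightarrow> (of_int p :: rat) \<in> sprimes Z"
  using sprimes_rat by blast

lemma hP1_rat: "hP1 TYPE(rat)"
  unfolding hP1_def
proof (intro allI impI)
  fix q x :: rat assume q: "q \<in> sprimes Z" and x: "x \<in> sZ Z \<and> x \<noteq> 0"
  obtain p where p: "q = of_int p" "p = 0 \<or> prime p" using q by (rule sprimesE)
  obtain x' where x': "x = of_int x'" using x sZ_rat by blast
  have "x' \<noteq> 0" using x x' by simp
  then have "Dp Z q x (of_int (dint p x'))" using Dp_rat[OF p(2)] p(1) x' by blast
  then show "\<exists>u. Dp Z q x u" by blast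
qed

lemma hP2_rat: "hP2 TYPE(rat)"
  unfolding hP2_def
proof (intro allI impI)
  fix q x u u' :: rat assume q: "q \<in> sprimes Z" and h: "x \<in> sZ Z \<and> x \<noteq> 0 \<and> Dp Z q x u \<and> Dp Z q x u'"
  obtain p where p: "q = of_int p" "p = 0 \<or> prime p" using q by (rule sprimesE)
  obtain x' where x': "x = of_int x'" using h sZ_rat by blast
  have "x' \<noteq> 0" using h x' by simp
  then show "u = u'" using Dp_rat[OF p(2) \<open>x' \<noteq> 0\<close>] h p(1) x' by simp
qed

lemma hP3_rat: "hP3 TYPE(rat)"
  unfolding hP3_def
proof (intro allI impI)
  fix q a r r' :: rat assume q: "q \<in> sprimes Z" and h: "a \<noteq> 0 \<and> DQ Z q a r \<and> DQ Z q a r'"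
  obtain p where p: "q = of_int p" "p = 0 \<or> prime p" using q by (rule sprimesE)
  show "r = r'" using DQ_uniq[OF p(2)] h p(1) by blast
qed

lemma hP4_rat: "hP4 TYPE(rat)"
  unfolding hP4_def
proof (intro allI impI)
  fix q a :: rat assume q: "q \<in> sprimes Z" and a: "a \<noteq> 0"
  obtain p where p: "q = of_int p" "p = 0 \<or> prime p" using q by (rule sprimesE)
  obtain n d where nd: "d > 0" "a = of_int n / of_int d" by (rule rat_rep)
  have "n \<noteq> 0" using a nd by auto
  moreover have "a * of_int d = of_int n" using nd by simp
  ultimately have "DQ Z q a (of_int (dint p n) / of_int (dint p d))" using DQ_intro[OF p(2)] nd p(1) by simp
  then show "\<exists>r. DQ Z q a r" by blast
qed

lemma hP5_rat: "hP5 TYPE(rat)"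
  unfolding hP5_def
proof (intro allI impI)
  fix q a b r s :: rat assume q: "q \<in> sprimes Z" and h: "a \<noteq> 0 \<and> b \<noteq> 0 \<and> DQ Z q a r \<and> DQ Z q b s"
  obtain p where p: "q = of_int p" "p = 0 \<or> prime p" using q by (rule sprimesE)
  obtain x1 y1 where 1: "x1 \<noteq> 0" "y1 \<noteq> 0" "a * of_int y1 = of_int x1"
     "r = of_int (dint p x1) / of_int (dint p y1)" using DQ_val[OF p(2)] h p(1) by blast
  obtain x2 y2 where 2: "x2 \<noteq> 0" "y2 \<noteq> 0" "b * of_int y2 = of_int x2"
     "s = of_int (dint p x2) / of_int (dint p y2)" using DQ_val[OF p(2)] h p(1) by blast
  have "(a * b) * of_int (y1 * y2) = of_int (x1 * x2)" using 1(3) 2(3)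
    by (simp add: algebra_simps)
  moreover have "x1 * x2 \<noteq> 0" "y1 * y2 \<noteq> 0" using 1 2 by simp_all
  ultimately have "DQ Z q (a * b) (of_int (dint p (x1 * x2)) / of_int (dint p (y1 * y2)))"
    using DQ_intro[OF p(2)] p(1) by blast
  moreover have "(of_int (dint p (x1 * x2)) / of_int (dint p (y1 * y2)) :: rat) = r * s"
    unfolding 1(4) 2(4) dint_mult[OF p(2) 1(1) 2(1)] dint_mult[OF p(2) 1(2) 2(2)] by simp
  ultimately show "DQ Z q (a * b) (r * s)" by simp
qed

lemma hP6_rat: "hP6 TYPE(rat)"
  unfolding hP6_def
proof (intro allI impI)
  fix q a r :: rat assume q: "q \<in> sprimes Z" and h: "a \<noteq> 0 \<and> DQ Z q a r"
  obtain p where p: "q = of_int p" "p = 0 \<or> prime p" using q by (rule sprimesE)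
  obtain x y where 1: "x \<noteq> 0" "y \<noteq> 0" "a * of_int y = of_int x"
     "r = of_int (dint p x) / of_int (dint p y)" using DQ_val[OF p(2)] h p(1) by blast
  show "r \<in> ppowN Z q \<or> (\<exists>w. w \<in> ppowN Z q \<and> r * w = 1)"
  proof (cases "p = 0")
    case True
    then have "r = 1" using 1(4) by (simp add: dint_def)
    then show ?thesis using one_ppowN by simp
  next
    case False
    then have pr: "prime p" using p by simp
    define m where "m = multiplicity p x"
    define n where "n = multiplicity p y"
    have pz: "(of_int p :: rat) \<noteq> 0" using pr by simp
    have r: "r = of_int p ^ m / of_int p ^ n" using 1(4) unfolding m_def n_def dint_def by simp
    show ?thesis
    proof (cases "n \<le> m")
      case True
      then have "r = of_int p ^ (m - n)" using r pz by (simp add: power_diff)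
      then have "r = of_int (p ^ (m - n))" by simp
      then show ?thesis using ppowN_rat[OF pr] p(1) by blast
    next
      case False
      then have "r * of_int p ^ (n - m) = 1" using r pz by (simp add: power_diff field_simps)
      then have "r * of_int (p ^ (n - m)) = 1" by simp
      moreover have "(of_int (p ^ (n - m)) :: rat) \<in> ppowN Z q" using ppowN_rat[OF pr] p(1) by blast
      ultimately show ?thesis by blast
    qed
  qed
qed

lemma hP7_rat: "hP7 TYPE(rat)"
  unfolding hP7_def
proof (intro allI impI)
  fix a b :: rat
  assume h: "a \<noteq> 0 \<and> b \<noteq> 0 \<and> sless Z 0 (a * b) \<and> (\<forall>p. p \<in> sprimes Z \<longrightarrow> (\<forall>r. DQ Z p a r \<longrightarrow> DQ Z p b r))"
  obtain x1 y1 where 1: "y1 > 0" "a = of_int x1 / of_int y1" by (rule rat_rep)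
  obtain x2 y2 where 2: "y2 > 0" "b = of_int x2 / of_int y2" by (rule rat_rep)
  have nz: "x1 \<noteq> 0" "x2 \<noteq> 0" using h 1 2 by auto
  have e1: "a * of_int y1 = of_int x1" "b * of_int y2 = of_int x2" using 1 2 by simp_all
  have mult: "multiplicity p (x1 * y2) = multiplicity p (x2 * y1)" if p: "prime p" for p
  proof -
    have pp: "p = 0 \<or> prime p" using p by simp
    have "DQ Z (of_int p) a (of_int (dint p x1) / of_int (dint p y1))"
      using DQ_intro[OF pp nz(1)] 1 e1 by simp
    then have "DQ Z (of_int p) b (of_int (dint p x1) / of_int (dint p y1))"
      using h sprimesI[OF pp] by blast
    moreover have "DQ Z (of_int p) b (of_int (dint p x2) / of_int (dint p y2))"
      using DQ_intro[OF pp nz(2)] 2 e1 by simp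
    ultimately have "(of_int (dint p x1) / of_int (dint p y1) :: rat) = of_int (dint p x2) / of_int (dint p y2)"
      using DQ_uniq[OF pp] h by blast
    moreover have "(of_int (dint p y1)::rat) \<noteq> 0" "(of_int (dint p y2)::rat) \<noteq> 0" using dint_nz[OF pp] by simp_all
    ultimately have "(of_int (dint p x1) :: rat) * of_int (dint p y2) = of_int (dint p x2) * of_int (dint p y1)"
      by (simp add: frac_eq_eq)
    then have "dint p x1 * dint p y2 = dint p x2 * dint p y1" by (metis of_int_eq_iff of_int_mult)
    then have "dint p (x1 * y2) = dint p (x2 * y1)" using dint_mult[OF pp] nz 1(1) 2(1) by simp
    then have "p ^ multiplicity p (x1 * y2) = p ^ multiplicity p (x2 * y1)" unfolding dint_def .
    moreover have "p > 1" using p prime_gt_1_int by blast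
    ultimately show ?thesis using power_inject_exp by blast
  qed
  have "normalize (x1 * y2) = normalize (x2 * y1)"
    by (rule multiplicity_eq_imp_eq) (use nz 1(1) 2(1) mult in auto)
  then have abs: "\<bar>x1 * y2\<bar> = \<bar>x2 * y1\<bar>" by simp
  have "0 < a * b" using h QLess by blast
  then have "0 < (of_int x1 * of_int x2 :: rat) / (of_int y1 * of_int y2)" using 1 2 by simp
  moreover have "(of_int y1 * of_int y2::rat) > 0" using 1(1) 2(1) by simp
  ultimately have "0 < (of_int x1 * of_int x2 :: rat)" by (auto simp: zero_less_divide_iff)
  then have "0 < x1 * x2" by (metis of_int_0_less_iff of_int_mult)
  then have "0 < (x1 * x2) * (y1 * y2)" using 1(1) 2(1) by simp
  then have "0 < (x1 * y2) * (x2 * y1)" by (simp add: algebra_simps)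
  then have "x1 * y2 = x2 * y1" using abs absprod by blast
  then have "(of_int x1 * of_int y2 :: rat) = of_int x2 * of_int y1" by (metis of_int_mult)
  then show "a = b" using 1 2 by (simp add: frac_eq_eq)
qed

lemma hS_rat: "hS1 TYPE(rat)" "hS2 TYPE(rat)" "hS3 TYPE(rat)" "hS4 TYPE(rat)"
  unfolding hS1_def hS2_def hS3_def hS4_def QLess
  by (auto simp: mult_pos_neg mult_neg_pos mult_neg_neg not_square_less_zero)
     (metis linorder_neqE_linordered_idom mult_neg_neg mult_pos_pos)

end

theorem theorem3p2:
  fixes Z :: rform
  assumes hZ: "defines_Z_in_Q Z"
    and hQ: "elem_equiv_Q TYPE('a::field)"
  shows "(\<forall>a0 a1 :: 'a. a0 \<noteq> 0 \<longrightarrow> a1 \<noteq> 0 \<longrightarrow>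
            (a0 = a1 \<longleftrightarrow> (\<forall>p\<in>sprimes Z. dpQ Z p a0 = dpQ Z p a1) \<and> sless Z 0 (a0 * a1)))
       \<and> (\<forall>a :: 'a. a \<noteq> 0 \<longrightarrow> (\<forall>p\<in>sprimes Z. dpQ Z p a \<in> ppowZ Z p) \<and> ssgn Z a \<in> {1, -1})
       \<and> (\<forall>a b :: 'a. a \<noteq> 0 \<longrightarrow> b \<noteq> 0 \<longrightarrow>
            (\<forall>p\<in>sprimes Z. dpQ Z p (a * b) = dpQ Z p a * dpQ Z p b)
            \<and> ssgn Z (a * b) = ssgn Z a * ssgn Z b)
       \<and> (\<forall>a b :: 'a. a \<noteq> 0 \<longrightarrow> b \<noteq> 0 \<longrightarrow>
            (\<forall>p\<in>sprimes Z. dpQ Z p a = dpQ Z p b) \<longrightarrow> ssgn Z a = ssgn Z b \<longrightarrow> a = b)"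
proof -
  interpret q: zq Z by unfold_locales (rule hZ)
  have tr: "sat (\<lambda>_. 0::'a) \<phi> = sat (\<lambda>_. 0::rat) \<phi>" if "sentence \<phi>" for \<phi>
    using hQ that unfolding elem_equiv_Q_def by blast
  have h1: "q.hP1 TYPE('a)"
    using q.P1(1)[where 'a='a] q.P1(1)[where 'a=rat] tr[OF q.P1(2)] q.hP1_rat by simp
  have h2: "q.hP2 TYPE('a)"
    using q.P2(1)[where 'a='a] q.P2(1)[where 'a=rat] tr[OF q.P2(2)] q.hP2_rat by simp
  have h3: "q.hP3 TYPE('a)"
    using q.P3(1)[where 'a='a] q.P3(1)[where 'a=rat] tr[OF q.P3(2)] q.hP3_rat by simp
  have h4: "q.hP4 TYPE('a)"
    using q.P4(1)[where 'a='a] q.P4(1)[where 'a=rat] tr[OF q.P4(2)] q.hP4_rat by simp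
  have h5: "q.hP5 TYPE('a)"
    using q.P5(1)[where 'a='a] q.P5(1)[where 'a=rat] tr[OF q.P5(2)] q.hP5_rat by simp
  have h6: "q.hP6 TYPE('a)"
    using q.P6(1)[where 'a='a] q.P6(1)[where 'a=rat] tr[OF q.P6(2)] q.hP6_rat by simp
  have h7: "q.hP7 TYPE('a)"
    using q.P7(1)[where 'a='a] q.P7(1)[where 'a=rat] tr[OF q.P7(2)] q.hP7_rat by simp
  have s1: "q.hS1 TYPE('a)"
    using q.S1(1)[where 'a='a] q.S1(1)[where 'a=rat] tr[OF q.S1(2)] q.hS_rat(1) by simp
  have s2: "q.hS2 TYPE('a)"
    using q.S2(1)[where 'a='a] q.S2(1)[where 'a=rat] tr[OF q.S2(2)] q.hS_rat(2) by simp
  have s3: "q.hS3 TYPE('a)"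
    using q.S3(1)[where 'a='a] q.S3(1)[where 'a=rat] tr[OF q.S3(2)] q.hS_rat(3) by simp
  have s4: "q.hS4 TYPE('a)"
    using q.S4(1)[where 'a='a] q.S4(1)[where 'a=rat] tr[OF q.S4(2)] q.hS_rat(4) by simp
  have c2: "1 + 1 \<noteq> (0::'a)"
    using q.C(1)[where 'a='a] q.C(1)[where 'a=rat] tr[OF q.C(2)] by simp
  interpret f: fside Z "TYPE('a)"
    by unfold_locales (fact q.fvZ h1 h2 h3 h4 h5 h6 h7 s1 s2 s3 s4 c2)+
  show ?thesis by (rule f.main)
qed

end
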